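(* Let $\Gamma$ be a coloring and $\Omega$ a $k$-ordering of $T_{d,k}$, and let $\mathcal T$ be the initial $d$-simplex. Then $(T_{d,k},\Gamma,\Omega,\mathcal T)$ is an object of $\mathscr C_{d,k}$ and it is universal: for every object $(\widetilde Y,\widehat\gamma,\widehat\omega,\widehat{\mathfrak a}_0)$ of $\mathscr C_{d,k}$ there exists a unique morphism $(T_{d,k},\Gamma,\Omega,\mathcal T)\to(\widetilde Y,\widehat\gamma,\widehat\omega,\widehat{\mathfrak a}_0)$.
   Context: Fix $d,k\ge1$, write $[\![d]\!]=\{0,\dots,d\}$. Multicomplexes: a $d$-multicomplex is a triple $\widetilde X=(X,\mathsf m,\mathsf g)$ where $X$ is a $d$-dimensional simplicial complex on a countable vertex set, $\mathsf m:X\to\mathbb N$ equals $1$ on the empty cell and on vertices, the multicells are pairs $(\tau,r)$, $\tau\in X$, $1\le r\le\mathsf m(\tau)$ (dimension $\dim\tau$), and $\mathsf g$ assigns to each multicell $(\tau,r)$ and each codimension-one face $\sigma$ of $\tau$ a multicell $\mathsf g((\tau,r),\sigma)=(\sigma,s)$; containment $\preceq$ is the reflexive–transitive closure of "$\mathfrak b=\mathsf g(\mathfrak a,\sigma)$"; consistency is required: if $(\sigma,s),(\sigma',s')$ have equal dimension, are contained in a common multicell, and $\rho=\sigma\cap\sigma'$ has codimension one in both, then $\mathsf g((\sigma,s),\rho)=\mathsf g((\sigma',s'),\rho)$. A simplicial complex is a multicomplex with $\mathsf m\equiv1$. $\widetilde X$ is pure if every multicell lies in a $d$-multicell; two $d$-multicells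 are neighbors if they contain a common $(d-1)$-multicell; $\widetilde X$ is $d$-lower path connected if any two $d$-multicells are joined by a chain of neighbors. For a $(d-1)$-multicell $\mathfrak b$, $\delta(\mathfrak b)$ is the set of $d$-multicells containing it and $\deg\mathfrak b=|\delta(\mathfrak b)|$. A coloring is a map $\gamma$ from vertices to $[\![d]\!]$ injective on every $d$-cell, extended to cells by $\gamma(\sigma)=\{\gamma(v):v\in\sigma\}$ and to multicells via their underlying cell. A $k$-ordering $\omega$ assigns to each $(d-1)$-multicell $\mathfrak b$ a homomorphism $\omega_{\mathfrak b}:\mathbb Z/k\mathbb Z\to\mathrm{Sym}(\delta(\mathfrak b))$ whose image acts transitively. The category $\mathscr C_{d,k}$ has as objects quartets $(\widetilde X,\gamma,\omega,\mathfrak a_0)$ with $\widetilde X$ a pure, colorable, $d$-lower path connected $d$-multicomplex all of whose $(d-1)$-multicells have degree $\le k$, $\gamma$ a coloring, $\omega$ a $k$-ordering, and $\mathfrak a_0$ a $d$-multicell (root). A morphism $(\widetilde X,\gamma,\omega,\mathfrak a_0)\to(\widetilde Y,\widehat\gamma,\widehat\omega,\widehat{\mathfrak a}_0)$ is a map $\widetilde\varphi$ from multicells of $\widetilde X$ to multicells of $\widetilde Y$ lying over a simplicial map $\varphi:X\to Y$ (the multicell $\widetilde\varphi((\sigma,r))$ lies over $\varphi(\sigma)$, with $\dim$ preserved), commuting with gluing ($\widetilde\varphi(\mathsf g(\mathfrak a,\sigma))=\mathsf g'(\widetilde\varphi(\mathfrak a),\varphi(\sigma))$), with $\widetilde\varphi(\mathfrak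 a_0)=\widehat{\mathfrak a}_0$, $\widehat\gamma\circ\widetilde\varphi=\gamma$, and $\widetilde\varphi(\omega_{\mathfrak b}(l).\mathfrak a)=\widehat\omega_{\widetilde\varphi(\mathfrak b)}(l).\widetilde\varphi(\mathfrak a)$ for all $\mathfrak b$, $\mathfrak a\in\delta(\mathfrak b)$, $l\in\mathbb Z/k\mathbb Z$. The $k$-regular $d$-dimensional arboreal complex $T_{d,k}$ is the simplicial complex obtained by starting from a single $d$-simplex $\mathcal T$, attaching to each of its $(d-1)$-faces $k-1$ new $d$-simplices each using a new vertex, and inductively attaching to each $(d-1)$-face created in the previous step $k-1$ new $d$-simplices each using a new vertex; $T_{d,k}$ is the union over all steps. *)

theory Defs
  imports Main "HOL-Library.Countable_Set"
begin

text \<open>Cells are finite vertex sets; the dimension of a cell is its cardinality minus one.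
  A multicell is a pair (cell, index r) with 1 <= r <= m cell.  The gluing map g sends a
  multicell and a codimension-one face of its cell to a multicell over that face.\<close>

type_synonym 'v mcell = "'v set \<times> nat"

definition simplicial_complex :: "nat \<Rightarrow> 'v set set \<Rightarrow> bool" where
  "simplicial_complex d X \<longleftrightarrow>
     {} \<in> X \<and>
     (\<forall>\<sigma>\<in>X. finite \<sigma> \<and> card \<sigma> \<le> d + 1) \<and>
     (\<forall>\<sigma>\<in>X. \<forall>\<tau>. \<tau> \<subseteq> \<sigma> \<longrightarrow> \<tau> \<in> X) \<and>
     (\<exists>\<sigma>\<in>X. card \<sigma> = d + 1) \<and>
     countable (\<Union>X)"

definition mcells :: "'v set set \<Rightarrow> ('v set \<Rightarrow> nat) \<Rightarrow> 'v mcell set" where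
  "mcells X m = {(\<tau>, r). \<tau> \<in> X \<and> 1 \<le> r \<and> r \<le> m \<tau>}"

definition codim1 :: "'v set \<Rightarrow> 'v set \<Rightarrow> bool" where
  "codim1 \<sigma> \<tau> \<longleftrightarrow> \<sigma> \<subseteq> \<tau> \<and> card \<sigma> + 1 = card \<tau>"

definition contain_step ::
  "'v set set \<Rightarrow> ('v set \<Rightarrow> nat) \<Rightarrow> ('v mcell \<Rightarrow> 'v set \<Rightarrow> 'v mcell) \<Rightarrow> 'v mcell rel" where
  "contain_step X m g = {(b, a). a \<in> mcells X m \<and> (\<exists>\<sigma>. codim1 \<sigma> (fst a) \<and> b = g a \<sigma>)}"

text \<open>(b, a) \<in> contained X m g  means  b \<preceq> a  (b is contained in a).\<close>
definition contained ::
  "'v set set \<Rightarrow> ('v set \<Rightarrow> nat) \<Rightarrow> ('v mcell \<Rightarrow> 'v set \<Rightarrow> 'v mcell) \<Rightarrow> 'v mcell rel" where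
  "contained X m g = (contain_step X m g)\<^sup>*"

definition multicomplex ::
  "nat \<Rightarrow> 'v set set \<Rightarrow> ('v set \<Rightarrow> nat) \<Rightarrow> ('v mcell \<Rightarrow> 'v set \<Rightarrow> 'v mcell) \<Rightarrow> bool" where
  "multicomplex d X m g \<longleftrightarrow>
     simplicial_complex d X \<and>
     (\<forall>\<tau>\<in>X. 1 \<le> m \<tau>) \<and>
     m {} = 1 \<and> (\<forall>v\<in>\<Union>X. m {v} = 1) \<and>
     (\<forall>a\<in>mcells X m. \<forall>\<sigma>. codim1 \<sigma> (fst a) \<longrightarrow>
         g a \<sigma> \<in> mcells X m \<and> fst (g a \<sigma>) = \<sigma>) \<and>
     (\<forall>a\<in>mcells X m. \<forall>b\<in>mcells X m. \<forall>c\<in>mcells X m.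
         card (fst a) = card (fst b) \<and> (a, c) \<in> contained X m g \<and> (b, c) \<in> contained X m g \<and>
         codim1 (fst a \<inter> fst b) (fst a) \<and> codim1 (fst a \<inter> fst b) (fst b)
         \<longrightarrow> g a (fst a \<inter> fst b) = g b (fst a \<inter> fst b))"

definition dcells :: "nat \<Rightarrow> 'v set set \<Rightarrow> ('v set \<Rightarrow> nat) \<Rightarrow> 'v mcell set" where
  "dcells n X m = {a \<in> mcells X m. card (fst a) = n + 1}"

definition pure ::
  "nat \<Rightarrow> 'v set set \<Rightarrow> ('v set \<Rightarrow> nat) \<Rightarrow> ('v mcell \<Rightarrow> 'v set \<Rightarrow> 'v mcell) \<Rightarrow> bool" where
  "pure d X m g \<longleftrightarrow> (\<forall>a\<in>mcells X m. \<exists>c\<in>dcells d X m. (a, c) \<in> contained X m g)"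

definition neighbors ::
  "nat \<Rightarrow> 'v set set \<Rightarrow> ('v set \<Rightarrow> nat) \<Rightarrow> ('v mcell \<Rightarrow> 'v set \<Rightarrow> 'v mcell) \<Rightarrow> 'v mcell rel" where
  "neighbors d X m g = {(a, b). a \<in> dcells d X m \<and> b \<in> dcells d X m \<and>
      (\<exists>c. card (fst c) = d \<and> (c, a) \<in> contained X m g \<and> (c, b) \<in> contained X m g)}"

definition lower_path_connected ::
  "nat \<Rightarrow> 'v set set \<Rightarrow> ('v set \<Rightarrow> nat) \<Rightarrow> ('v mcell \<Rightarrow> 'v set \<Rightarrow> 'v mcell) \<Rightarrow> bool" where
  "lower_path_connected d X m g \<longleftrightarrow>
     (\<forall>a\<in>dcells d X m. \<forall>b\<in>dcells d X m. (a, b) \<in> (neighbors d X m g)\<^sup>*)"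

definition coface ::
  "nat \<Rightarrow> 'v set set \<Rightarrow> ('v set \<Rightarrow> nat) \<Rightarrow> ('v mcell \<Rightarrow> 'v set \<Rightarrow> 'v mcell) \<Rightarrow> 'v mcell \<Rightarrow> 'v mcell set" where
  "coface d X m g b = {a \<in> dcells d X m. (b, a) \<in> contained X m g}"

definition coloring :: "nat \<Rightarrow> 'v set set \<Rightarrow> ('v \<Rightarrow> nat) \<Rightarrow> bool" where
  "coloring d X \<gamma> \<longleftrightarrow> (\<forall>v\<in>\<Union>X. \<gamma> v \<le> d) \<and> (\<forall>\<sigma>\<in>X. card \<sigma> = d + 1 \<longrightarrow> inj_on \<gamma> \<sigma>)"

text \<open>A k-ordering: for every (d-1)-multicell b, a homomorphism from Z/kZ (modelled as
  {0..<k} with addition mod k) into Sym(delta(b)) with transitive image.\<close>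
definition k_ordering ::
  "nat \<Rightarrow> nat \<Rightarrow> 'v set set \<Rightarrow> ('v set \<Rightarrow> nat) \<Rightarrow> ('v mcell \<Rightarrow> 'v set \<Rightarrow> 'v mcell)
     \<Rightarrow> ('v mcell \<Rightarrow> nat \<Rightarrow> 'v mcell \<Rightarrow> 'v mcell) \<Rightarrow> bool" where
  "k_ordering d k X m g \<omega> \<longleftrightarrow>
     (\<forall>b\<in>dcells (d - 1) X m.
        (\<forall>l<k. bij_betw (\<omega> b l) (coface d X m g b) (coface d X m g b)) \<and>
        (\<forall>l<k. \<forall>l'<k. \<forall>a\<in>coface d X m g b.
            \<omega> b ((l + l') mod k) a = \<omega> b l (\<omega> b l' a)) \<and>
        (\<forall>a\<in>coface d X m g b. \<forall>a'\<in>coface d X m g b. \<exists>l<k. \<omega> b l a = a'))"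

definition is_object ::
  "nat \<Rightarrow> nat \<Rightarrow> 'v set set \<Rightarrow> ('v set \<Rightarrow> nat) \<Rightarrow> ('v mcell \<Rightarrow> 'v set \<Rightarrow> 'v mcell)
     \<Rightarrow> ('v \<Rightarrow> nat) \<Rightarrow> ('v mcell \<Rightarrow> nat \<Rightarrow> 'v mcell \<Rightarrow> 'v mcell) \<Rightarrow> 'v mcell \<Rightarrow> bool" where
  "is_object d k X m g \<gamma> \<omega> a0 \<longleftrightarrow>
     multicomplex d X m g \<and> pure d X m g \<and> (\<exists>\<gamma>'. coloring d X \<gamma>') \<and>
     lower_path_connected d X m g \<and>
     (\<forall>b\<in>dcells (d - 1) X m. finite (coface d X m g b) \<and> card (coface d X m g b) \<le> k) \<and>
     coloring d X \<gamma> \<and> k_ordering d k X m g \<omega> \<and> a0 \<in> dcells d X m"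

definition is_morphism ::
  "nat \<Rightarrow> nat \<Rightarrow> 'v set set \<Rightarrow> ('v set \<Rightarrow> nat) \<Rightarrow> ('v mcell \<Rightarrow> 'v set \<Rightarrow> 'v mcell)
     \<Rightarrow> ('v \<Rightarrow> nat) \<Rightarrow> ('v mcell \<Rightarrow> nat \<Rightarrow> 'v mcell \<Rightarrow> 'v mcell) \<Rightarrow> 'v mcell
     \<Rightarrow> 'w set set \<Rightarrow> ('w set \<Rightarrow> nat) \<Rightarrow> ('w mcell \<Rightarrow> 'w set \<Rightarrow> 'w mcell)
     \<Rightarrow> ('w \<Rightarrow> nat) \<Rightarrow> ('w mcell \<Rightarrow> nat \<Rightarrow> 'w mcell \<Rightarrow> 'w mcell) \<Rightarrow> 'w mcell
     \<Rightarrow> ('v mcell \<Rightarrow> 'w mcell) \<Rightarrow> bool" where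
  "is_morphism d k X m g \<gamma> \<omega> a0 Y m' g' \<gamma>' \<omega>' b0 F \<longleftrightarrow>
     (\<exists>\<phi> :: 'v \<Rightarrow> 'w.
        (\<forall>\<sigma>\<in>X. \<phi> ` \<sigma> \<in> Y) \<and>
        (\<forall>a\<in>mcells X m. F a \<in> mcells Y m' \<and> fst (F a) = \<phi> ` fst a \<and>
                          card (fst (F a)) = card (fst a)) \<and>
        (\<forall>a\<in>mcells X m. \<forall>\<sigma>. codim1 \<sigma> (fst a) \<longrightarrow> F (g a \<sigma>) = g' (F a) (\<phi> ` \<sigma>))) \<and>
     F a0 = b0 \<and>
     (\<forall>a\<in>mcells X m. \<gamma>' ` fst (F a) = \<gamma> ` fst a) \<and>
     (\<forall>b\<in>dcells (d - 1) X m. \<forall>a\<in>coface d X m g b. \<forall>l<k.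
         F (\<omega> b l a) = \<omega>' (F b) l (F a))"

text \<open>A non-initial simplex is reached by a (reversed) path x_t # ... # x_1 with x_s = (i_s, j_s),
  i_s <= d (the colour of the removed vertex = colour of the new vertex),
  1 <= j_s <= k-1 (which of the k-1 new simplices), and i_{s+1} \<noteq> i_s (the face used at
  step s+1 must be one created at step s, i.e. must contain the newest vertex).
  The new vertex created by that step is the list x_t # ... # x_1 itself; the colour of a
  vertex is the first component of its head.\<close>

fun arb_path :: "nat \<Rightarrow> nat \<Rightarrow> (nat \<times> nat) list \<Rightarrow> bool" where
  "arb_path d k [] = True"
| "arb_path d k [x] = (fst x \<le> d \<and> 1 \<le> snd x \<and> snd x \<le> k - 1)"
| "arb_path d k (x # y # q) =
     (fst x \<le> d \<and> 1 \<le> snd x \<and> snd x \<le> k - 1 \<and> fst x \<noteq> fst y \<and> arb_path d k (y # q))"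

fun arb_simplex :: "nat \<Rightarrow> (nat \<times> nat) list \<Rightarrow> (nat \<times> nat) list set" where
  "arb_simplex d [] = {[(i, 0)] | i. i \<le> d}"
| "arb_simplex d (x # q) = {v \<in> arb_simplex d q. fst (hd v) \<noteq> fst x} \<union> {x # q}"

definition arboreal :: "nat \<Rightarrow> nat \<Rightarrow> (nat \<times> nat) list set set" where
  "arboreal d k = {\<tau>. \<exists>p. arb_path d k p \<and> \<tau> \<subseteq> arb_simplex d p}"

definition arb_m :: "(nat \<times> nat) list set \<Rightarrow> nat" where
  "arb_m \<tau> = 1"

definition arb_g :: "(nat \<times> nat) list mcell \<Rightarrow> (nat \<times> nat) list set \<Rightarrow> (nat \<times> nat) list mcell" where
  "arb_g a \<sigma> = (\<sigma>, 1)"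

definition arb_root :: "nat \<Rightarrow> (nat \<times> nat) list mcell" where
  "arb_root d = (arb_simplex d [], 1)"

end

theory Submission
  imports Defs
begin


lemma codim1_finite_diff:
  assumes "codim1 \<sigma> \<tau>" "finite \<tau>"
  obtains x where "x \<in> \<tau>" "\<sigma> = \<tau> - {x}"
proof -
  have "finite \<sigma>" using assms unfolding codim1_def using finite_subset by blast
  then have "card (\<tau> - \<sigma>) = card \<tau> - card \<sigma>" using assms unfolding codim1_def
    by (simp add: card_Diff_subset)
  moreover have "Suc (card \<sigma>) = card \<tau>" using assms unfolding codim1_def by simp
  ultimately have "card (\<tau> - \<sigma>) = 1" by simp
  then obtain x where "\<tau> - \<sigma> = {x}" by (rule card_1_singletonE)
  then show ?thesis using that assms(1) unfolding codim1_def by blast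
qed

context
  fixes d X m g
  assumes mc: "multicomplex d X m g"
begin

lemma mc_g: "a \<in> mcells X m \<Longrightarrow> codim1 \<sigma> (fst a) \<Longrightarrow> g a \<sigma> \<in> mcells X m \<and> fst (g a \<sigma>) = \<sigma>"
  using mc unfolding multicomplex_def by blast

lemma mc_fin: "a \<in> mcells X m \<Longrightarrow> finite (fst a)"
  using mc unfolding multicomplex_def simplicial_complex_def mcells_def by auto

lemma mc_step: "a \<in> mcells X m \<Longrightarrow> codim1 \<sigma> (fst a) \<Longrightarrow> (g a \<sigma>, a) \<in> contained X m g"
  unfolding contained_def contain_step_def by blast

lemma mc_down: "(c, a) \<in> contained X m g \<Longrightarrow> a \<in> mcells X m \<Longrightarrow> c \<in> mcells X m \<and> fst c \<subseteq> fst a"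
  unfolding contained_def
proof (induction rule: rtrancl_induct)
  case base then show ?case by simp
next
  case (step y z)
  then obtain \<sigma> where "codim1 \<sigma> (fst z)" "y = g z \<sigma>" unfolding contain_step_def by blast
  with step mc_g[of z \<sigma>] show ?case unfolding codim1_def by blast
qed

lemma mc_eq: assumes "(c, a) \<in> contained X m g" "a \<in> mcells X m" "fst c = fst a" shows "c = a"
proof -
  from assms(1) have "a = c \<or> (\<exists>y. (c, y) \<in> contained X m g \<and> (y, a) \<in> contain_step X m g)"
    unfolding contained_def by (blast elim: rtranclE)
  then show ?thesis
  proof
    assume "\<exists>y. (c, y) \<in> contained X m g \<and> (y, a) \<in> contain_step X m g"
    then obtain y \<sigma> where y: "(c, y) \<in> contained X m g" "codim1 \<sigma> (fst a)" "y = g a \<sigma>"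
      unfolding contain_step_def by blast
    with mc_g[OF assms(2) y(2)] mc_down[OF y(1)] have "fst c \<subseteq> \<sigma>" by auto
    moreover have "finite (fst a)" using mc_fin assms(2) by blast
    moreover have "finite \<sigma>" using y(2) \<open>finite (fst a)\<close> unfolding codim1_def using finite_subset by blast
    ultimately have "card (fst a) \<le> card \<sigma>" using assms(3) card_mono by metis
    with y(2) show ?thesis unfolding codim1_def by simp
  qed simp
qed

lemma mc_trans: "(a, b) \<in> contained X m g \<Longrightarrow> (b, c) \<in> contained X m g \<Longrightarrow> (a, c) \<in> contained X m g"
  unfolding contained_def by simp

lemma mc_exist: "a \<in> mcells X m \<Longrightarrow> \<sigma> \<subseteq> fst a \<Longrightarrow> \<exists>c. (c, a) \<in> contained X m g \<and> fst c = \<sigma>"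
proof (induction "card (fst a - \<sigma>)" arbitrary: a rule: less_induct)
  case less
  show ?case
  proof (cases "\<sigma> = fst a")
    case True then show ?thesis unfolding contained_def by blast
  next
    case False
    then obtain x where x: "x \<in> fst a" "x \<notin> \<sigma>" using less by blast
    have fin: "finite (fst a)" using mc_fin less by blast
    have cd: "codim1 (fst a - {x}) (fst a)"
    proof -
      have "card (fst a) > 0" using x fin card_gt_0_iff by blast
      then show ?thesis using x fin unfolding codim1_def by (simp add: card_Diff_singleton)
    qed
    let ?b = "g a (fst a - {x})"
    have b: "?b \<in> mcells X m" "fst ?b = fst a - {x}" using mc_g[OF less(2) cd] by auto
    have eq: "fst ?b - \<sigma> = (fst a - \<sigma>) - {x}" using b(2) by blast
    have "card (fst ?b - \<sigma>) < card (fst a - \<sigma>)" unfolding eq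
      using x fin by (intro card_Diff1_less) auto
    then obtain c where "(c, ?b) \<in> contained X m g" "fst c = \<sigma>"
      using less(1)[OF _ b(1)] b(2) less(3) x by blast
    then show ?thesis using mc_trans mc_step[OF less(2) cd] by blast
  qed
qed


lemma mc_last: "(c, a) \<in> contained X m g \<Longrightarrow> c = a \<or> (\<exists>\<sigma>. codim1 \<sigma> (fst a) \<and> a \<in> mcells X m \<and> (c, g a \<sigma>) \<in> contained X m g)"
  unfolding contained_def contain_step_def by (erule rtranclE) blast+

lemma mc_uniq_aux:
  "\<forall>a c1 c2. card (fst a) = n \<longrightarrow> a \<in> mcells X m \<longrightarrow> (c1, a) \<in> contained X m g \<longrightarrow> (c2, a) \<in> contained X m g
     \<longrightarrow> fst c1 = fst c2 \<longrightarrow> c1 = c2"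
proof (induction n rule: less_induct)
  case (less n)
  show ?case
  proof (intro allI impI)
    fix a c1 c2
    assume n: "card (fst a) = n" and a: "a \<in> mcells X m" and h1: "(c1, a) \<in> contained X m g"
      and h2: "(c2, a) \<in> contained X m g" and f: "fst c1 = fst c2"
    have fin: "finite (fst a)" using mc_fin a by blast
    show "c1 = c2"
    proof (cases "c1 = a \<or> c2 = a")
      case True
      then show ?thesis using mc_eq h1 h2 a f by metis
    next
      case False
      then obtain \<sigma>1 \<sigma>2 where s1: "codim1 \<sigma>1 (fst a)" "(c1, g a \<sigma>1) \<in> contained X m g"
        and s2: "codim1 \<sigma>2 (fst a)" "(c2, g a \<sigma>2) \<in> contained X m g"
        using mc_last[OF h1] mc_last[OF h2] by blast
      define y1 where "y1 = g a \<sigma>1"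
      define y2 where "y2 = g a \<sigma>2"
      have y1: "y1 \<in> mcells X m" "fst y1 = \<sigma>1" using mc_g[OF a s1(1)] y1_def by auto
      have y2: "y2 \<in> mcells X m" "fst y2 = \<sigma>2" using mc_g[OF a s2(1)] y2_def by auto
      have cy1: "card (fst y1) = card \<sigma>1" using y1 by simp
      have cy2: "card (fst y2) = card \<sigma>2" using y2 by simp
      have lt1: "card \<sigma>1 < n" using s1(1) n unfolding codim1_def by simp
      have lt2: "card \<sigma>2 < n" using s2(1) n unfolding codim1_def by simp
      show ?thesis
      proof (cases "\<sigma>1 = \<sigma>2")
        case True
        then show ?thesis using less[rule_format, OF lt1 cy1 y1(1)] s1 s2 f y1_def by simp
      next
        case False
        obtain x1 where x1: "x1 \<in> fst a" "\<sigma>1 = fst a - {x1}" using codim1_finite_diff[OF s1(1) fin] by blast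
        obtain x2 where x2: "x2 \<in> fst a" "\<sigma>2 = fst a - {x2}" using codim1_finite_diff[OF s2(1) fin] by blast
        have x12: "x1 \<noteq> x2" using False x1 x2 by blast
        define \<rho> where "\<rho> = \<sigma>1 \<inter> \<sigma>2"
        have fs1: "finite \<sigma>1" using x1 fin by simp
        have fs2: "finite \<sigma>2" using x2 fin by simp
        have r1: "\<rho> = \<sigma>1 - {x2}" "x2 \<in> \<sigma>1" using x1 x2 x12 \<rho>_def by auto
        have r2: "\<rho> = \<sigma>2 - {x1}" "x1 \<in> \<sigma>2" using x1 x2 x12 \<rho>_def by auto
        have cr1: "codim1 \<rho> \<sigma>1"
        proof -
          have "card \<sigma>1 > 0" using r1 fs1 card_gt_0_iff by blast
          then show ?thesis using r1 fs1 unfolding codim1_def by (simp add: card_Diff_singleton)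
        qed
        have cr2: "codim1 \<rho> \<sigma>2"
        proof -
          have "card \<sigma>2 > 0" using r2 fs2 card_gt_0_iff by blast
          then show ?thesis using r2 fs2 unfolding codim1_def by (simp add: card_Diff_singleton)
        qed
        have cards: "card (fst y1) = card (fst y2)" using s1(1) s2(1) y1 y2 unfolding codim1_def by simp
        have c1a: "(y1, a) \<in> contained X m g" using mc_step[OF a s1(1)] y1_def by simp
        have c2a: "(y2, a) \<in> contained X m g" using mc_step[OF a s2(1)] y2_def by simp
        have int: "fst y1 \<inter> fst y2 = \<rho>" using y1 y2 \<rho>_def by simp
        have eqg: "g y1 \<rho> = g y2 \<rho>"
          using mc unfolding multicomplex_def
          using y1(1) y2(1) a cards c1a c2a cr1 cr2 int y1(2) y2(2) by metis
        define z where "z = g y1 \<rho>"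
        have z: "z \<in> mcells X m" "fst z = \<rho>" using mc_g[OF y1(1)] cr1 y1(2) z_def by auto
        have "fst c1 \<subseteq> \<sigma>1" using mc_down[OF s1(2)] y1 y1_def by auto
        moreover have "fst c1 \<subseteq> \<sigma>2" using mc_down[OF s2(2)] y2 y2_def f by auto
        ultimately have "fst c1 \<subseteq> fst z" using z \<rho>_def by auto
        then obtain e where e: "(e, z) \<in> contained X m g" "fst e = fst c1" using mc_exist[OF z(1)] by blast
        have cz1: "codim1 \<rho> (fst y1)" using cr1 y1(2) by simp
        have cz2: "codim1 \<rho> (fst y2)" using cr2 y2(2) by simp
        have zy1: "(z, y1) \<in> contained X m g" using mc_step[OF y1(1) cz1] z_def by simp
        have zy2: "(z, y2) \<in> contained X m g" using mc_step[OF y2(1) cz2] z_def eqg by simp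
        have ez1: "(e, y1) \<in> contained X m g" using mc_trans[OF e(1) zy1] .
        have ez2: "(e, y2) \<in> contained X m g" using mc_trans[OF e(1) zy2] .
        have "c1 = e" using less[rule_format, OF lt1 cy1 y1(1)] s1(2) ez1 e(2) y1_def by simp
        moreover have "c2 = e" using less[rule_format, OF lt2 cy2 y2(1)] s2(2) ez2 e(2) f y2_def by simp
        ultimately show ?thesis by simp
      qed
    qed
  qed
qed

lemma mc_uniq: "a \<in> mcells X m \<Longrightarrow> (c1, a) \<in> contained X m g \<Longrightarrow> (c2, a) \<in> contained X m g
     \<Longrightarrow> fst c1 = fst c2 \<Longrightarrow> c1 = c2"
  using mc_uniq_aux by blast

end


lemma path_Cons: "arb_path d k (x # q) \<longleftrightarrow> fst x \<le> d \<and> 1 \<le> snd x \<and> snd x \<le> k - 1 \<and>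
    (q \<noteq> [] \<longrightarrow> fst x \<noteq> fst (hd q)) \<and> arb_path d k q"
  by (cases q) auto

lemma path_app: "arb_path d k (r @ v) \<Longrightarrow> arb_path d k v"
  by (induction r) (auto simp: path_Cons)

lemma path_set: "arb_path d k p \<Longrightarrow> y \<in> set p \<Longrightarrow> fst y \<le> d \<and> 1 \<le> snd y"
  by (induction p) (auto simp: path_Cons)

lemma S_Cons: "arb_simplex d (x # q) = {v \<in> arb_simplex d q. fst (hd v) \<noteq> fst x} \<union> {x # q}"
  by simp

lemma S_cases: "v \<in> arb_simplex d p \<Longrightarrow> (\<exists>i\<le>d. v = [(i, 0)]) \<or> (v \<noteq> [] \<and> (\<exists>r. p = r @ v))"
proof (induction p)
  case Nil then show ?case by auto
next
  case (Cons x q)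
  show ?case
  proof (cases "v = x # q")
    case True then show ?thesis by auto
  next
    case False
    then have "v \<in> arb_simplex d q" using Cons.prems by auto
    from Cons.IH[OF this] show ?thesis
    proof
      assume "v \<noteq> [] \<and> (\<exists>r. q = r @ v)"
      then obtain r where "v \<noteq> []" "q = r @ v" by blast
      then show ?thesis by (intro disjI2 conjI exI[of _ "x # r"]) auto
    qed blast
  qed
qed

lemma S_vertex:
  assumes "arb_path d k p" "v \<in> arb_simplex d p"
  shows "(snd (hd v) = 0 \<and> (\<exists>i\<le>d. v = [(i, 0)])) \<or>
         (snd (hd v) \<noteq> 0 \<and> v \<noteq> [] \<and> (\<exists>r. p = r @ v) \<and> arb_path d k v)"
proof -
  from S_cases[OF assms(2)] show ?thesis
  proof
    assume "v \<noteq> [] \<and> (\<exists>r. p = r @ v)"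
    then obtain r where r: "v \<noteq> []" "p = r @ v" by blast
    then have "hd v \<in> set p" by simp
    then have "snd (hd v) \<noteq> 0" using path_set[OF assms(1)] by fastforce
    then show ?thesis using r path_app assms(1) by blast
  qed auto
qed

lemma S_col:
  assumes "arb_path d k p"
  shows "(\<lambda>v. fst (hd v)) ` arb_simplex d p = {..d} \<and> inj_on (\<lambda>v. fst (hd v)) (arb_simplex d p)"
  using assms
proof (induction p)
  case Nil
  have "(\<lambda>v. fst (hd v)) ` {[(i, 0)] |i. i \<le> d} = {..d}"
  proof
    show "{..d} \<subseteq> (\<lambda>v. fst (hd v)) ` {[(i, 0)] |i. i \<le> d}"
    proof
      fix i assume "i \<in> {..d}"
      then show "i \<in> (\<lambda>v. fst (hd v)) ` {[(i, 0)] |i. i \<le> d}"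
        by (intro image_eqI[of _ _ "[(i,0)]"]) auto
    qed
  qed auto
  moreover have "inj_on (\<lambda>v. fst (hd v)) {[(i, 0)] |i. i \<le> d}" by (auto simp: inj_on_def)
  ultimately show ?case by simp
next
  case (Cons x q)
  let ?c = "\<lambda>v::(nat\<times>nat) list. fst (hd v)"
  have q: "arb_path d k q" and xd: "fst x \<le> d" using Cons.prems path_Cons by auto
  note IH = Cons.IH[OF q]
  let ?A = "{v \<in> arb_simplex d q. ?c v \<noteq> fst x}"
  have A: "?c ` ?A = {..d} - {fst x}" using IH by auto
  have "?c ` (?A \<union> {x # q}) = {..d}" using A xd by auto
  moreover have "inj_on ?c (?A \<union> {x # q})"
  proof -
    have "inj_on ?c ?A" using IH by (auto intro: inj_on_subset)
    moreover have "?c (x # q) \<notin> ?c ` (?A - {x # q})" by auto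
    ultimately show ?thesis by simp
  qed
  ultimately show ?case by (simp only: S_Cons)
qed

lemma S_fin: "arb_path d k p \<Longrightarrow> finite (arb_simplex d p)"
proof -
  assume p: "arb_path d k p"
  have "finite ((\<lambda>v. fst (hd v)) ` arb_simplex d p)" using S_col[OF p] by simp
  then show ?thesis using S_col[OF p] finite_imageD by blast
qed

lemma S_card: "arb_path d k p \<Longrightarrow> card (arb_simplex d p) = d + 1"
proof -
  assume p: "arb_path d k p"
  have "card ((\<lambda>v. fst (hd v)) ` arb_simplex d p) = card (arb_simplex d p)"
    using S_col[OF p] card_image by blast
  then show ?thesis using S_col[OF p] by simp
qed

lemma new_notin: "arb_path d k (x # q) \<Longrightarrow> x # q \<notin> arb_simplex d q"
proof
  assume p: "arb_path d k (x # q)" and m: "x # q \<in> arb_simplex d q"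
  from S_cases[OF m] show False
  proof
    assume "\<exists>i\<le>d. x # q = [(i, 0)]"
    then show False using p path_Cons by auto
  next
    assume "x # q \<noteq> [] \<and> (\<exists>r. q = r @ x # q)"
    then obtain r where "q = r @ x # q" by blast
    then have "length q = length (r @ x # q)" by simp
    then show False by simp
  qed
qed

lemma arb_mem: "\<tau> \<in> arboreal d k \<longleftrightarrow> (\<exists>p. arb_path d k p \<and> \<tau> \<subseteq> arb_simplex d p)"
  unfolding arboreal_def by simp

lemma mcells_arb: "a \<in> mcells (arboreal d k) arb_m \<longleftrightarrow> fst a \<in> arboreal d k \<and> snd a = 1"
  unfolding mcells_def arb_m_def by (cases a) auto

lemma T_mc: "multicomplex d (arboreal d k) arb_m arb_g"
  unfolding multicomplex_def
proof (intro conjI)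
  show "simplicial_complex d (arboreal d k)"
    unfolding simplicial_complex_def
  proof (intro conjI)
    show "{} \<in> arboreal d k" unfolding arb_mem by (intro exI[of _ "[]"]) auto
    show "\<forall>\<sigma>\<in>arboreal d k. finite \<sigma> \<and> card \<sigma> \<le> d + 1"
    proof
      fix \<sigma> assume "\<sigma> \<in> arboreal d k"
      then obtain p where p: "arb_path d k p" "\<sigma> \<subseteq> arb_simplex d p" unfolding arb_mem by blast
      show "finite \<sigma> \<and> card \<sigma> \<le> d + 1"
        using S_fin[OF p(1)] S_card[OF p(1)] p(2) card_mono[of "arb_simplex d p" \<sigma>] finite_subset by auto
    qed
    show "\<forall>\<sigma>\<in>arboreal d k. \<forall>\<tau>\<subseteq>\<sigma>. \<tau> \<in> arboreal d k"
    proof (intro ballI allI impI)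
      fix \<sigma> \<tau> assume "\<sigma> \<in> arboreal d k" "\<tau> \<subseteq> \<sigma>"
      then show "\<tau> \<in> arboreal d k" unfolding arb_mem by (blast intro: subset_trans)
    qed
    show "\<exists>\<sigma>\<in>arboreal d k. card \<sigma> = d + 1"
    proof
      show "arb_simplex d [] \<in> arboreal d k" unfolding arb_mem by (intro exI[of _ "[]"]) simp
      show "card (arb_simplex d []) = d + 1" using S_card[of d k "[]"] by simp
    qed
    show "countable (\<Union> (arboreal d k))" by simp
  qed
  show "\<forall>a\<in>mcells (arboreal d k) arb_m. \<forall>\<sigma>. codim1 \<sigma> (fst a) \<longrightarrow>
      arb_g a \<sigma> \<in> mcells (arboreal d k) arb_m \<and> fst (arb_g a \<sigma>) = \<sigma>"
  proof (intro ballI allI impI)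
    fix a \<sigma> assume a: "a \<in> mcells (arboreal d k) arb_m" and c: "codim1 \<sigma> (fst a)"
    then obtain p where "arb_path d k p" "fst a \<subseteq> arb_simplex d p" unfolding mcells_arb arb_mem by blast
    then have "\<sigma> \<in> arboreal d k" using c unfolding codim1_def arb_mem by blast
    then show "arb_g a \<sigma> \<in> mcells (arboreal d k) arb_m \<and> fst (arb_g a \<sigma>) = \<sigma>"
      unfolding mcells_arb arb_g_def by simp
  qed
qed (auto simp: arb_m_def arb_g_def)

lemma coloring_top:
  assumes "coloring d X \<gamma>" "\<tau> \<in> X" "card \<tau> = d + 1"
  shows "\<gamma> ` \<tau> = {..d} \<and> inj_on \<gamma> \<tau>"
proof -
  have inj: "inj_on \<gamma> \<tau>" using assms unfolding coloring_def by blast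
  have sub: "\<gamma> ` \<tau> \<subseteq> {..d}" using assms unfolding coloring_def by blast
  have fin: "finite \<tau>"
  proof (rule ccontr)
    assume "infinite \<tau>" then have "card \<tau> = 0" by simp
    with assms(3) show False by simp
  qed
  have "card (\<gamma> ` \<tau>) = card {..d}" using card_image[OF inj] assms(3) by simp
  then show ?thesis using card_subset_eq[OF _ sub] inj by simp
qed

lemma dcells_T: "a \<in> dcells d (arboreal d k) arb_m \<Longrightarrow> \<exists>p. arb_path d k p \<and> a = (arb_simplex d p, 1)"
proof -
  assume "a \<in> dcells d (arboreal d k) arb_m"
  then have a: "fst a \<in> arboreal d k" "snd a = 1" "card (fst a) = d + 1"
    unfolding dcells_def mcells_arb by auto
  then obtain p where p: "arb_path d k p" "fst a \<subseteq> arb_simplex d p" unfolding arb_mem by blast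
  then have "fst a = arb_simplex d p" using card_subset_eq[OF S_fin[OF p(1)] p(2)] S_card[OF p(1)] a(3) by simp
  then show ?thesis using p a by (intro exI[of _ p]) (simp add: prod_eq_iff)
qed

lemma S_dcell: "arb_path d k p \<Longrightarrow> (arb_simplex d p, 1) \<in> dcells d (arboreal d k) arb_m"
  unfolding dcells_def mcells_arb arb_mem using S_card by fastforce

context
  fixes d k X m g \<omega> b
  assumes ord: "k_ordering d k X m g \<omega>" and k1: "1 \<le> k" and b: "b \<in> dcells (d - 1) X m"
begin

lemma ord_in: "a \<in> coface d X m g b \<Longrightarrow> l < k \<Longrightarrow> \<omega> b l a \<in> coface d X m g b"
  using ord b unfolding k_ordering_def bij_betw_def by blast

lemma ord_hom: "a \<in> coface d X m g b \<Longrightarrow> l < k \<Longrightarrow> l' < k \<Longrightarrow> \<omega> b ((l + l') mod k) a = \<omega> b l (\<omega> b l' a)"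
  using ord b unfolding k_ordering_def by blast

lemma ord_trans: "a \<in> coface d X m g b \<Longrightarrow> a' \<in> coface d X m g b \<Longrightarrow> \<exists>l<k. \<omega> b l a = a'"
  using ord b unfolding k_ordering_def by blast

lemma ord_zero: "a \<in> coface d X m g b \<Longrightarrow> \<omega> b 0 a = a"
proof -
  assume a: "a \<in> coface d X m g b"
  have k0: "0 < k" using k1 by simp
  have inj: "inj_on (\<omega> b 0) (coface d X m g b)" using ord b k0 unfolding k_ordering_def bij_betw_def by blast
  have "\<omega> b 0 a = \<omega> b 0 (\<omega> b 0 a)" using ord_hom[OF a k0 k0] by simp
  then show ?thesis using inj_onD[OF inj] a ord_in[OF a k0] by metis
qed

lemma ord_card: "finite (coface d X m g b) \<and> card (coface d X m g b) \<le> k"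
proof (cases "coface d X m g b = {}")
  case False
  then obtain a where a: "a \<in> coface d X m g b" by blast
  have sub: "coface d X m g b \<subseteq> (\<lambda>l. \<omega> b l a) ` {..<k}" using ord_trans[OF a] by blast
  then show ?thesis using surj_card_le[OF _ sub] finite_surj[OF _ sub] by simp
qed simp

lemma ord_inj:
  assumes a: "a \<in> coface d X m g b" and c: "card (coface d X m g b) = k"
  shows "inj_on (\<lambda>l. \<omega> b l a) {..<k}"
proof -
  have "(\<lambda>l. \<omega> b l a) ` {..<k} = coface d X m g b" using ord_trans[OF a] ord_in[OF a] by blast
  then show ?thesis using c by (intro eq_card_imp_inj_on) auto
qed

end



lemma beta_card:
  assumes "arb_path d k q" "i \<le> d"
  shows "card {v \<in> arb_simplex d q. fst (hd v) \<noteq> i} = d"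
proof -
  let ?B = "{v \<in> arb_simplex d q. fst (hd v) \<noteq> i}"
  have c: "(\<lambda>v. fst (hd v)) ` arb_simplex d q = {..d}" "inj_on (\<lambda>v. fst (hd v)) (arb_simplex d q)"
    using S_col[OF assms(1)] by auto
  have "(\<lambda>v. fst (hd v)) ` ?B = {..d} - {i}" using c(1) by auto
  moreover have "inj_on (\<lambda>v. fst (hd v)) ?B" using c(2) by (auto intro: inj_on_subset)
  ultimately have "card ?B = card ({..d} - {i})" using card_image[of "\<lambda>v. fst (hd v)" ?B] by simp
  then show ?thesis using assms(2) by simp
qed

lemma beta_T: "arb_path d k q \<Longrightarrow> {v \<in> arb_simplex d q. fst (hd v) \<noteq> i} \<in> arboreal d k"
  unfolding arb_mem by blast

lemma in_coface:
  assumes "arb_path d k r" "\<beta> \<subseteq> arb_simplex d r" "card \<beta> = d"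
  shows "(arb_simplex d r, 1) \<in> coface d (arboreal d k) arb_m arb_g (\<beta>, 1)"
proof -
  have m: "(arb_simplex d r, 1) \<in> mcells (arboreal d k) arb_m" using S_dcell[OF assms(1)] unfolding dcells_def by blast
  have "codim1 \<beta> (arb_simplex d r)" unfolding codim1_def using assms S_card[OF assms(1)] by simp
  then have "(arb_g (arb_simplex d r, 1) \<beta>, (arb_simplex d r, 1)) \<in> contained (arboreal d k) arb_m arb_g"
    using mc_step[OF T_mc m] by simp
  then show ?thesis unfolding coface_def arb_g_def using S_dcell[OF assms(1)] by simp
qed

lemma face_T:
  assumes d1: "1 \<le> d" and b: "b \<in> dcells (d - 1) (arboreal d k) arb_m"
  shows "\<exists>q i. arb_path d k q \<and> i \<le> d \<and> (q \<noteq> [] \<longrightarrow> fst (hd q) \<noteq> i) \<and>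
           b = ({v \<in> arb_simplex d q. fst (hd v) \<noteq> i}, 1)"
proof -
  have b1: "fst b \<in> arboreal d k" "snd b = 1" "card (fst b) = d" using b d1 unfolding dcells_def mcells_arb by auto
  then obtain p where p: "arb_path d k p" "fst b \<subseteq> arb_simplex d p" unfolding arb_mem by blast
  have "codim1 (fst b) (arb_simplex d p)" unfolding codim1_def using p b1 S_card[OF p(1)] by simp
  then obtain u where u: "u \<in> arb_simplex d p" "fst b = arb_simplex d p - {u}"
    by (rule codim1_finite_diff[OF _ S_fin[OF p(1)]])
  define i where "i = fst (hd u)"
  have c: "(\<lambda>v. fst (hd v)) ` arb_simplex d p = {..d}" "inj_on (\<lambda>v. fst (hd v)) (arb_simplex d p)"
    using S_col[OF p(1)] by auto
  have id: "i \<le> d" using c(1) u(1) i_def by auto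
  have fb: "fst b = {v \<in> arb_simplex d p. fst (hd v) \<noteq> i}"
    using u c(2) i_def unfolding inj_on_def by auto
  have bb: "b = (fst b, 1)" using b1 by (simp add: prod_eq_iff)
  show ?thesis
  proof (cases "p = [] \<or> fst (hd p) \<noteq> i")
    case True
    then show ?thesis using p(1) id fb bb by (intro exI[of _ p] exI[of _ i]) auto
  next
    case False
    then obtain y q where pq: "p = y # q" "fst y = i" by (cases p) auto
    have q: "arb_path d k q" "q \<noteq> [] \<longrightarrow> fst (hd q) \<noteq> i" using p(1) pq path_Cons by auto
    have "fst b = {v \<in> arb_simplex d q. fst (hd v) \<noteq> i}" using fb pq by auto
    then show ?thesis using q id bb by (intro exI[of _ q] exI[of _ i]) auto
  qed
qed

lemma coface_T:
  assumes d1: "1 \<le> d" and k1: "1 \<le> k" and ord: "k_ordering d k (arboreal d k) arb_m arb_g \<Omega>"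
    and q: "arb_path d k q" "i \<le> d" "q \<noteq> [] \<longrightarrow> fst (hd q) \<noteq> i"
  defines "\<beta> \<equiv> {v \<in> arb_simplex d q. fst (hd v) \<noteq> i}"
  shows "coface d (arboreal d k) arb_m arb_g (\<beta>, 1) =
           insert (arb_simplex d q, 1) ((\<lambda>j. (arb_simplex d ((i, j) # q), 1)) ` {1..k-1})"
    and "card (coface d (arboreal d k) arb_m arb_g (\<beta>, 1)) = k"
    and "(\<beta>, 1) \<in> dcells (d - 1) (arboreal d k) arb_m"
proof -
  let ?C = "insert (arb_simplex d q, 1::nat) ((\<lambda>j. (arb_simplex d ((i, j) # q), 1::nat)) ` {1..k-1})"
  have cb: "card \<beta> = d" using beta_card[OF q(1,2)] \<beta>_def by simp
  show bd: "(\<beta>, 1) \<in> dcells (d - 1) (arboreal d k) arb_m"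
    unfolding dcells_def mcells_arb using beta_T[OF q(1)] cb d1 \<beta>_def by simp
  have pj: "arb_path d k ((i, j) # q)" if "j \<in> {1..k-1}" for j
    using that q unfolding path_Cons by auto
  have sub: "?C \<subseteq> coface d (arboreal d k) arb_m arb_g (\<beta>, 1)"
  proof -
    have "(arb_simplex d q, 1) \<in> coface d (arboreal d k) arb_m arb_g (\<beta>, 1)"
      using in_coface[OF q(1) _ cb] \<beta>_def by auto
    moreover have "(arb_simplex d ((i, j) # q), 1) \<in> coface d (arboreal d k) arb_m arb_g (\<beta>, 1)"
      if "j \<in> {1..k-1}" for j
      using in_coface[OF pj[OF that] _ cb] \<beta>_def by auto
    ultimately show ?thesis by blast
  qed
  have new: "(i, j) # q \<in> arb_simplex d ((i, j) # q)" for j by simp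
  have notq: "(i, j) # q \<notin> arb_simplex d q" if "j \<in> {1..k-1}" for j using new_notin[OF pj[OF that]] .
  have inj: "inj_on (\<lambda>j. (arb_simplex d ((i, j) # q), 1::nat)) {1..k-1}"
  proof (rule inj_onI)
    fix j j' assume j: "j \<in> {1..k-1}" "j' \<in> {1..k-1}"
      and e: "(arb_simplex d ((i, j) # q), 1::nat) = (arb_simplex d ((i, j') # q), 1)"
    then have "(i, j) # q \<in> arb_simplex d ((i, j') # q)" using new[of j] by simp
    then show "j = j'" using notq[OF j(1)] by auto
  qed
  have nin: "(arb_simplex d q, 1::nat) \<notin> (\<lambda>j. (arb_simplex d ((i, j) # q), 1::nat)) ` {1..k-1}"
  proof
    assume "(arb_simplex d q, 1) \<in> (\<lambda>j. (arb_simplex d ((i, j) # q), 1)) ` {1..k-1}"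
    then obtain j where j: "j \<in> {1..k-1}" "arb_simplex d q = arb_simplex d ((i, j) # q)" by auto
    then show False using notq[OF j(1)] new[of j] by simp
  qed
  have fimg: "finite ((\<lambda>j. (arb_simplex d ((i, j) # q), 1::nat)) ` {1..k-1})" by simp
  have "card ?C = Suc (card ((\<lambda>j. (arb_simplex d ((i, j) # q), 1::nat)) ` {1..k-1}))"
    by (rule card_insert_disjoint[OF fimg nin])
  also have "\<dots> = Suc (card {1..k-1})" by (simp only: card_image[OF inj])
  also have "\<dots> = k" using k1 by simp
  finally have cC: "card ?C = k" .
  have fin: "finite (coface d (arboreal d k) arb_m arb_g (\<beta>, 1))"
    and le: "card (coface d (arboreal d k) arb_m arb_g (\<beta>, 1)) \<le> k"
    using ord_card[OF ord k1 bd] by auto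
  have "card ?C = card (coface d (arboreal d k) arb_m arb_g (\<beta>, 1))"
    using card_mono[OF fin sub] le cC by simp
  then show eq: "coface d (arboreal d k) arb_m arb_g (\<beta>, 1) = ?C"
    using card_subset_eq[OF fin sub] by simp
  show "card (coface d (arboreal d k) arb_m arb_g (\<beta>, 1)) = k" using eq cC by simp
qed

lemma coface_T_card:
  assumes d1: "1 \<le> d" and k1: "1 \<le> k" and ord: "k_ordering d k (arboreal d k) arb_m arb_g \<Omega>"
    and b: "b \<in> dcells (d - 1) (arboreal d k) arb_m"
  shows "card (coface d (arboreal d k) arb_m arb_g b) = k"
proof -
  obtain q i where "arb_path d k q" "i \<le> d" "q \<noteq> [] \<longrightarrow> fst (hd q) \<noteq> i"
    "b = ({v \<in> arb_simplex d q. fst (hd v) \<noteq> i}, 1)" using face_T[OF d1 b] by blast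
  then show ?thesis using coface_T(2)[OF d1 k1 ord] by simp
qed

lemma step_nb:
  assumes "arb_path d k (x # q)"
  shows "((arb_simplex d q, 1), (arb_simplex d (x # q), 1)) \<in> neighbors d (arboreal d k) arb_m arb_g"
    and "((arb_simplex d (x # q), 1), (arb_simplex d q, 1)) \<in> neighbors d (arboreal d k) arb_m arb_g"
proof -
  have q: "arb_path d k q" and xd: "fst x \<le> d" using assms path_Cons by auto
  define \<beta> where "\<beta> = {v \<in> arb_simplex d q. fst (hd v) \<noteq> fst x}"
  have cb: "card \<beta> = d" using beta_card[OF q xd] \<beta>_def by simp
  have c1: "(arb_simplex d q, 1) \<in> coface d (arboreal d k) arb_m arb_g (\<beta>, 1)"
    using in_coface[OF q _ cb] \<beta>_def by auto
  have c2: "(arb_simplex d (x # q), 1) \<in> coface d (arboreal d k) arb_m arb_g (\<beta>, 1)"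
    using in_coface[OF assms _ cb] \<beta>_def by auto
  show "((arb_simplex d q, 1), (arb_simplex d (x # q), 1)) \<in> neighbors d (arboreal d k) arb_m arb_g"
    using c1 c2 cb unfolding neighbors_def coface_def by auto
  show "((arb_simplex d (x # q), 1), (arb_simplex d q, 1)) \<in> neighbors d (arboreal d k) arb_m arb_g"
    using c1 c2 cb unfolding neighbors_def coface_def by auto
qed

lemma conn:
  "arb_path d k p \<Longrightarrow>
    ((arb_simplex d [], 1), (arb_simplex d p, 1)) \<in> (neighbors d (arboreal d k) arb_m arb_g)\<^sup>* \<and>
    ((arb_simplex d p, 1), (arb_simplex d [], 1)) \<in> (neighbors d (arboreal d k) arb_m arb_g)\<^sup>*"
proof (induction p)
  case (Cons x q)
  have q: "arb_path d k q" using Cons.prems path_Cons by auto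
  note IH = Cons.IH[OF q]
  show ?case
    using rtrancl_into_rtrancl[OF conjunct1[OF IH] step_nb(1)[OF Cons.prems]]
      converse_rtrancl_into_rtrancl[OF step_nb(2)[OF Cons.prems] conjunct2[OF IH]] by blast
qed simp

theorem T_obj:
  assumes d1: "1 \<le> d" and k1: "1 \<le> k" and col: "coloring d (arboreal d k) \<Gamma>"
    and ord: "k_ordering d k (arboreal d k) arb_m arb_g \<Omega>"
  shows "is_object d k (arboreal d k) arb_m arb_g \<Gamma> \<Omega> (arb_root d)"
  unfolding is_object_def
proof (intro conjI)
  show mc: "multicomplex d (arboreal d k) arb_m arb_g" by (rule T_mc)
  show "pure d (arboreal d k) arb_m arb_g"
    unfolding pure_def
  proof
    fix a assume a: "a \<in> mcells (arboreal d k) arb_m"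
    then obtain p where p: "arb_path d k p" "fst a \<subseteq> arb_simplex d p" unfolding mcells_arb arb_mem by blast
    have m: "(arb_simplex d p, 1) \<in> mcells (arboreal d k) arb_m" using S_dcell[OF p(1)] unfolding dcells_def by blast
    have "fst a \<subseteq> fst (arb_simplex d p, 1::nat)" using p(2) by simp
    then obtain e where e: "(e, (arb_simplex d p, 1)) \<in> contained (arboreal d k) arb_m arb_g" "fst e = fst a"
      using mc_exist[OF mc m] by blast
    have "e \<in> mcells (arboreal d k) arb_m" using mc_down[OF mc e(1) m] by blast
    then have "e = a" using a e(2) unfolding mcells_arb by (simp add: prod_eq_iff)
    then show "\<exists>c\<in>dcells d (arboreal d k) arb_m. (a, c) \<in> contained (arboreal d k) arb_m arb_g"
      using e(1) S_dcell[OF p(1)] by blast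
  qed
  show "\<exists>\<gamma>'. coloring d (arboreal d k) \<gamma>'" using col by blast
  show "lower_path_connected d (arboreal d k) arb_m arb_g"
    unfolding lower_path_connected_def
  proof (intro ballI)
    fix a b assume "a \<in> dcells d (arboreal d k) arb_m" "b \<in> dcells d (arboreal d k) arb_m"
    then obtain p p' where pp: "arb_path d k p" "a = (arb_simplex d p, 1)" "arb_path d k p'" "b = (arb_simplex d p', 1)"
      using dcells_T by blast
    show "(a, b) \<in> (neighbors d (arboreal d k) arb_m arb_g)\<^sup>*"
      using rtrancl_trans[OF conjunct2[OF conn[OF pp(1)]] conjunct1[OF conn[OF pp(3)]]] pp(2,4) by simp
  qed
  show "\<forall>b\<in>dcells (d - 1) (arboreal d k) arb_m.
      finite (coface d (arboreal d k) arb_m arb_g b) \<and> card (coface d (arboreal d k) arb_m arb_g b) \<le> k"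
    using ord_card[OF ord k1] by blast
  show "coloring d (arboreal d k) \<Gamma>" by (rule col)
  show "k_ordering d k (arboreal d k) arb_m arb_g \<Omega>" by (rule ord)
  show "arb_root d \<in> dcells d (arboreal d k) arb_m" unfolding arb_root_def using S_dcell[of d k "[]"] by simp
qed



locale univ =
  fixes d k :: nat and \<Gamma> :: "(nat \<times> nat) list \<Rightarrow> nat"
    and \<Omega> :: "(nat \<times> nat) list mcell \<Rightarrow> nat \<Rightarrow> (nat \<times> nat) list mcell \<Rightarrow> (nat \<times> nat) list mcell"
    and Y :: "'w set set" and m' :: "'w set \<Rightarrow> nat" and g' :: "'w mcell \<Rightarrow> 'w set \<Rightarrow> 'w mcell"
    and \<gamma>' :: "'w \<Rightarrow> nat" and \<omega>' :: "'w mcell \<Rightarrow> nat \<Rightarrow> 'w mcell \<Rightarrow> 'w mcell" and b0 :: "'w mcell"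
  assumes d1: "1 \<le> d" and k1: "1 \<le> k" and colT: "coloring d (arboreal d k) \<Gamma>"
    and ordT: "k_ordering d k (arboreal d k) arb_m arb_g \<Omega>"
    and objY: "is_object d k Y m' g' \<gamma>' \<omega>' b0"
begin

lemma mcY: "multicomplex d Y m' g'" using objY unfolding is_object_def by blast
lemma colY: "coloring d Y \<gamma>'" using objY unfolding is_object_def by blast
lemma ordY: "k_ordering d k Y m' g' \<omega>'" using objY unfolding is_object_def by blast
lemma b0Y: "b0 \<in> dcells d Y m'" using objY unfolding is_object_def by blast

lemma colY_top: assumes "a \<in> dcells d Y m'" shows "\<gamma>' ` fst a = {..d} \<and> inj_on \<gamma>' (fst a)"
proof -
  have "fst a \<in> Y" "card (fst a) = d + 1" using assms unfolding dcells_def mcells_def by auto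
  then show ?thesis using coloring_top[OF colY] by blast
qed

lemma colT_top: assumes "arb_path d k p" shows "\<Gamma> ` arb_simplex d p = {..d} \<and> inj_on \<Gamma> (arb_simplex d p)"
proof -
  have "arb_simplex d p \<in> arboreal d k" unfolding arb_mem using assms by blast
  then show ?thesis using coloring_top[OF colT _ S_card[OF assms]] by blast
qed

definition faceY :: "'w mcell \<Rightarrow> 'w set \<Rightarrow> 'w mcell" where
  "faceY a \<sigma> = (THE c. (c, a) \<in> contained Y m' g' \<and> fst c = \<sigma>)"

lemma faceY: assumes "a \<in> mcells Y m'" "\<sigma> \<subseteq> fst a"
  shows "(faceY a \<sigma>, a) \<in> contained Y m' g' \<and> fst (faceY a \<sigma>) = \<sigma> \<and> faceY a \<sigma> \<in> mcells Y m'"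
proof -
  obtain c where c: "(c, a) \<in> contained Y m' g'" "fst c = \<sigma>" using mc_exist[OF mcY assms] by blast
  have "\<exists>!c. (c, a) \<in> contained Y m' g' \<and> fst c = \<sigma>"
  proof (rule ex1I)
    show "(c, a) \<in> contained Y m' g' \<and> fst c = \<sigma>" using c by blast
    fix c' assume "(c', a) \<in> contained Y m' g' \<and> fst c' = \<sigma>"
    then show "c' = c" using mc_uniq[OF mcY assms(1) _ c(1)] c(2) by auto
  qed
  then have "(faceY a \<sigma>, a) \<in> contained Y m' g' \<and> fst (faceY a \<sigma>) = \<sigma>"
    unfolding faceY_def by (rule theI')
  then show ?thesis using mc_down[OF mcY _ assms(1)] by blast
qed

lemma faceY_eq: assumes "a \<in> mcells Y m'" "(c, a) \<in> contained Y m' g'" "fst c = \<sigma>" shows "faceY a \<sigma> = c"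
proof -
  have "\<sigma> \<subseteq> fst a" using mc_down[OF mcY assms(2,1)] assms(3) by blast
  then have "(faceY a \<sigma>, a) \<in> contained Y m' g'" "fst (faceY a \<sigma>) = \<sigma>" using faceY[OF assms(1)] by auto
  then show ?thesis using mc_uniq[OF mcY assms(1) _ assms(2)] assms(3) by simp
qed

definition Lq :: "(nat \<times> nat) list \<Rightarrow> nat \<times> nat \<Rightarrow> nat" where
  "Lq q x = (SOME l. l < k \<and> \<Omega> ({v \<in> arb_simplex d q. fst (hd v) \<noteq> fst x}, 1) l (arb_simplex d q, 1)
      = (arb_simplex d (x # q), 1))"

primrec FP :: "(nat \<times> nat) list \<Rightarrow> 'w mcell" where
  "FP [] = b0"
| "FP (x # q) = \<omega>' (g' (FP q) {w \<in> fst (FP q). \<gamma>' w \<in> \<Gamma> ` {v \<in> arb_simplex d q. fst (hd v) \<noteq> fst x}})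
      (Lq q x) (FP q)"

definition birth :: "(nat \<times> nat) list \<Rightarrow> (nat \<times> nat) list" where
  "birth v = (if snd (hd v) = 0 then [] else v)"

definition phi :: "(nat \<times> nat) list \<Rightarrow> 'w" where
  "phi v = (THE w. w \<in> fst (FP (birth v)) \<and> \<gamma>' w = \<Gamma> v)"

definition phiprop :: "(nat \<times> nat) list \<Rightarrow> bool" where
  "phiprop p \<longleftrightarrow> FP p \<in> dcells d Y m' \<and> (\<forall>v\<in>arb_simplex d p. phi v \<in> fst (FP p) \<and> \<gamma>' (phi v) = \<Gamma> v)"

lemma phi_new:
  assumes p: "arb_path d k p" and F: "FP p \<in> dcells d Y m'" and v: "v \<in> arb_simplex d p" and b: "birth v = p"
  shows "phi v \<in> fst (FP p) \<and> \<gamma>' (phi v) = \<Gamma> v"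
proof -
  have "\<Gamma> v \<in> {..d}" using colT_top[OF p] v by blast
  then obtain w where w: "w \<in> fst (FP p)" "\<gamma>' w = \<Gamma> v" using colY_top[OF F] by (metis imageE)
  have "\<exists>!w. w \<in> fst (FP p) \<and> \<gamma>' w = \<Gamma> v"
  proof (rule ex1I)
    show "w \<in> fst (FP p) \<and> \<gamma>' w = \<Gamma> v" using w by blast
    fix w' assume "w' \<in> fst (FP p) \<and> \<gamma>' w' = \<Gamma> v"
    then show "w' = w" using inj_onD[of \<gamma>' "fst (FP p)" w' w] colY_top[OF F] w by auto
  qed
  then show ?thesis unfolding phi_def b by (rule theI')
qed

lemma face_sel:
  assumes p: "arb_path d k p" and pp: "phiprop p" and \<beta>: "\<beta> \<subseteq> arb_simplex d p"
  shows "{w \<in> fst (FP p). \<gamma>' w \<in> \<Gamma> ` \<beta>} = phi ` \<beta>"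
proof
  have F: "FP p \<in> dcells d Y m'" using pp phiprop_def by blast
  have inj: "inj_on \<gamma>' (fst (FP p))" using colY_top[OF F] by blast
  show "{w \<in> fst (FP p). \<gamma>' w \<in> \<Gamma> ` \<beta>} \<subseteq> phi ` \<beta>"
  proof
    fix w assume "w \<in> {w \<in> fst (FP p). \<gamma>' w \<in> \<Gamma> ` \<beta>}"
    then obtain v where w: "w \<in> fst (FP p)" "v \<in> \<beta>" "\<gamma>' w = \<Gamma> v" by blast
    then have "phi v \<in> fst (FP p)" "\<gamma>' (phi v) = \<Gamma> v" using pp \<beta> unfolding phiprop_def by auto
    then have "w = phi v" using inj_onD[OF inj, of w "phi v"] w by simp
    then show "w \<in> phi ` \<beta>" using w by blast
  qed
  show "phi ` \<beta> \<subseteq> {w \<in> fst (FP p). \<gamma>' w \<in> \<Gamma> ` \<beta>}" using pp \<beta> unfolding phiprop_def by auto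
qed

lemma phi_inj: assumes "arb_path d k p" "phiprop p" shows "inj_on phi (arb_simplex d p)"
proof (rule inj_onI)
  fix v v' assume v: "v \<in> arb_simplex d p" "v' \<in> arb_simplex d p" "phi v = phi v'"
  then have "\<Gamma> v = \<Gamma> v'" using assms(2) unfolding phiprop_def by metis
  then show "v = v'" using colT_top[OF assms(1)] v inj_onD by metis
qed

lemma phi_img: assumes "arb_path d k p" "phiprop p" shows "phi ` arb_simplex d p = fst (FP p)"
proof -
  have F: "FP p \<in> dcells d Y m'" using assms phiprop_def by blast
  have "{w \<in> fst (FP p). \<gamma>' w \<in> \<Gamma> ` arb_simplex d p} = fst (FP p)"
    using colT_top[OF assms(1)] colY_top[OF F] by auto
  then show ?thesis using face_sel[OF assms] by simp
qed

lemma FP_mcell: "phiprop p \<Longrightarrow> FP p \<in> mcells Y m'"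
  unfolding phiprop_def dcells_def by blast


lemma step:
  assumes p: "arb_path d k (x # q)" and pq: "phiprop q"
  defines "\<beta> \<equiv> {v \<in> arb_simplex d q. fst (hd v) \<noteq> fst x}"
  shows "Lq q x < k \<and> \<Omega> (\<beta>, 1) (Lq q x) (arb_simplex d q, 1) = (arb_simplex d (x # q), 1)"
    and "g' (FP q) (phi ` \<beta>) \<in> dcells (d - 1) Y m'" and "fst (g' (FP q) (phi ` \<beta>)) = phi ` \<beta>"
    and "FP (x # q) = \<omega>' (g' (FP q) (phi ` \<beta>)) (Lq q x) (FP q)"
    and "FP q \<in> coface d Y m' g' (g' (FP q) (phi ` \<beta>))"
    and "FP (x # q) \<in> coface d Y m' g' (g' (FP q) (phi ` \<beta>))"
    and "(\<beta>, 1) \<in> dcells (d - 1) (arboreal d k) arb_m"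
    and "(arb_simplex d q, 1) \<in> coface d (arboreal d k) arb_m arb_g (\<beta>, 1)"
    and "(arb_simplex d (x # q), 1) \<in> coface d (arboreal d k) arb_m arb_g (\<beta>, 1)"
proof -
  have q: "arb_path d k q" and xd: "fst x \<le> d" using p path_Cons by auto
  have cb: "card \<beta> = d" using beta_card[OF q xd] \<beta>_def by simp
  have bsub: "\<beta> \<subseteq> arb_simplex d q" using \<beta>_def by blast
  show bT: "(\<beta>, 1) \<in> dcells (d - 1) (arboreal d k) arb_m"
    unfolding dcells_def mcells_arb using beta_T[OF q] cb d1 \<beta>_def by simp
  show c1: "(arb_simplex d q, 1) \<in> coface d (arboreal d k) arb_m arb_g (\<beta>, 1)"
    using in_coface[OF q bsub cb] .
  show c2: "(arb_simplex d (x # q), 1) \<in> coface d (arboreal d k) arb_m arb_g (\<beta>, 1)"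
    using in_coface[OF p _ cb] \<beta>_def by auto
  have ex: "\<exists>l. l < k \<and> \<Omega> (\<beta>, 1) l (arb_simplex d q, 1) = (arb_simplex d (x # q), 1)"
    using ord_trans[OF ordT k1 bT c1 c2] by blast
  show "Lq q x < k \<and> \<Omega> (\<beta>, 1) (Lq q x) (arb_simplex d q, 1) = (arb_simplex d (x # q), 1)"
    unfolding Lq_def \<beta>_def[symmetric] by (rule someI_ex[OF ex])
  then have Lk: "Lq q x < k" using someI_ex[OF ex] unfolding Lq_def \<beta>_def[symmetric] by blast
  have F: "FP q \<in> dcells d Y m'" using pq phiprop_def by blast
  have Fm: "FP q \<in> mcells Y m'" using FP_mcell[OF pq] .
  have sel: "{w \<in> fst (FP q). \<gamma>' w \<in> \<Gamma> ` \<beta>} = phi ` \<beta>" using face_sel[OF q pq bsub] .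
  have cphi: "card (phi ` \<beta>) = d" using card_image[OF inj_on_subset[OF phi_inj[OF q pq] bsub]] cb by simp
  have cF: "card (fst (FP q)) = d + 1" using F unfolding dcells_def by blast
  have sub: "phi ` \<beta> \<subseteq> fst (FP q)" using phi_img[OF q pq] bsub by blast
  have cd: "codim1 (phi ` \<beta>) (fst (FP q))" unfolding codim1_def using cphi cF sub by simp
  note g = mc_g[OF mcY Fm cd]
  show fst: "fst (g' (FP q) (phi ` \<beta>)) = phi ` \<beta>" using g by blast
  show fbd: "g' (FP q) (phi ` \<beta>) \<in> dcells (d - 1) Y m'" unfolding dcells_def using g cphi d1 by simp
  show eq: "FP (x # q) = \<omega>' (g' (FP q) (phi ` \<beta>)) (Lq q x) (FP q)"
    using sel unfolding \<beta>_def by simp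
  show cq: "FP q \<in> coface d Y m' g' (g' (FP q) (phi ` \<beta>))"
    unfolding coface_def using F mc_step[OF mcY Fm cd] by blast
  show "FP (x # q) \<in> coface d Y m' g' (g' (FP q) (phi ` \<beta>))"
    unfolding eq by (rule ord_in[OF ordY k1 fbd cq Lk])
qed

lemma inv: "arb_path d k p \<Longrightarrow> phiprop p"
proof (induction p)
  case Nil
  have "phi v \<in> fst (FP []) \<and> \<gamma>' (phi v) = \<Gamma> v" if v: "v \<in> arb_simplex d []" for v
  proof -
    have "birth v = []" using v unfolding birth_def by auto
    then show ?thesis using phi_new[OF Nil _ v] b0Y by simp
  qed
  then show ?case unfolding phiprop_def using b0Y by simp
next
  case (Cons x q)
  have q: "arb_path d k q" and x1: "1 \<le> snd x" using Cons.prems path_Cons by auto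
  have pq: "phiprop q" using Cons.IH[OF q] .
  define \<beta> where "\<beta> = {v \<in> arb_simplex d q. fst (hd v) \<noteq> fst x}"
  note st = step[OF Cons.prems pq, folded \<beta>_def]
  have F: "FP (x # q) \<in> dcells d Y m'" using st(6) unfolding coface_def by blast
  have cont: "(g' (FP q) (phi ` \<beta>), FP (x # q)) \<in> contained Y m' g'" using st(6) unfolding coface_def by blast
  have Fm: "FP (x # q) \<in> mcells Y m'" using F unfolding dcells_def by blast
  have sub: "phi ` \<beta> \<subseteq> fst (FP (x # q))" using mc_down[OF mcY cont Fm] st(3) by simp
  have "phi v \<in> fst (FP (x # q)) \<and> \<gamma>' (phi v) = \<Gamma> v" if v: "v \<in> arb_simplex d (x # q)" for v
  proof (cases "v = x # q")
    case True
    then have "birth v = x # q" unfolding birth_def using x1 by simp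
    then show ?thesis using phi_new[OF Cons.prems F v] by simp
  next
    case False
    then have vb: "v \<in> \<beta>" using v \<beta>_def by auto
    then have "\<gamma>' (phi v) = \<Gamma> v" using pq \<beta>_def unfolding phiprop_def by blast
    then show ?thesis using sub vb by blast
  qed
  then show ?case unfolding phiprop_def using F by blast
qed


definition base :: "(nat \<times> nat) list set \<Rightarrow> (nat \<times> nat) list" where
  "base \<tau> = (SOME r. r \<in> insert [] (birth ` \<tau>) \<and> (\<forall>v\<in>\<tau>. length (birth v) \<le> length r))"

lemma base_nil: assumes "\<tau> \<subseteq> arb_simplex d []" shows "base \<tau> = []"
proof -
  have b: "birth v = []" if "v \<in> \<tau>" for v using assms that unfolding birth_def by auto
  have ex: "\<exists>r. r \<in> insert [] (birth ` \<tau>) \<and> (\<forall>v\<in>\<tau>. length (birth v) \<le> length r)"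
    using b by (intro exI[of _ "[]"]) auto
  have "base \<tau> \<in> insert [] (birth ` \<tau>)" using someI_ex[OF ex] unfolding base_def by blast
  then show ?thesis using b by auto
qed

lemma base_top:
  assumes p: "arb_path d k p" and ne: "p \<noteq> []" and pt: "p \<in> \<tau>" and sub: "\<tau> \<subseteq> arb_simplex d p"
  shows "base \<tau> = p"
proof -
  have bp: "birth p = p" using ne path_set[OF p, of "hd p"] unfolding birth_def by auto
  have len: "length (birth v) \<le> length p" if "v \<in> \<tau>" for v
  proof -
    have "v \<in> arb_simplex d p" using that sub by blast
    from S_vertex[OF p this] show ?thesis unfolding birth_def by auto
  qed
  have ex: "\<exists>r. r \<in> insert [] (birth ` \<tau>) \<and> (\<forall>v\<in>\<tau>. length (birth v) \<le> length r)"
  proof (intro exI[of _ p] conjI)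
    show "p \<in> insert [] (birth ` \<tau>)" using imageI[OF pt, of birth] bp by simp
  qed (use len in auto)
  have r: "base \<tau> \<in> insert [] (birth ` \<tau>)" "\<forall>v\<in>\<tau>. length (birth v) \<le> length (base \<tau>)"
    using someI_ex[OF ex] unfolding base_def by blast+
  have "length (birth p) \<le> length (base \<tau>)" using r(2) pt by blast
  then have lp: "length p \<le> length (base \<tau>)" using bp by simp
  then have "base \<tau> \<noteq> []" using ne by auto
  then obtain v where v: "v \<in> \<tau>" "base \<tau> = birth v" using r(1) by auto
  then have bv: "birth v \<noteq> []" using \<open>base \<tau> \<noteq> []\<close> by simp
  then have vv: "birth v = v" "snd (hd v) \<noteq> 0" unfolding birth_def by (auto split: if_splits)
  have "v \<in> arb_simplex d p" using v sub by blast
  then have "(\<exists>r. p = r @ v)" using S_vertex[OF p, of v] vv(2) by auto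
  then obtain r' where "p = r' @ v" by blast
  then show ?thesis using lp v(2) vv(1) by simp
qed

lemma key:
  "arb_path d k p \<Longrightarrow> \<tau> \<subseteq> arb_simplex d p \<Longrightarrow> faceY (FP p) (phi ` \<tau>) = faceY (FP (base \<tau>)) (phi ` \<tau>)"
proof (induction p)
  case Nil
  then show ?case using base_nil by simp
next
  case (Cons x q)
  show ?case
  proof (cases "x # q \<in> \<tau>")
    case True
    then show ?thesis using base_top[OF Cons.prems(1) _ True Cons.prems(2)] by simp
  next
    case False
    have q: "arb_path d k q" using Cons.prems path_Cons by auto
    have pq: "phiprop q" using inv[OF q] .
    define \<beta> where "\<beta> = {v \<in> arb_simplex d q. fst (hd v) \<noteq> fst x}"
    note st = step[OF Cons.prems(1) pq, folded \<beta>_def]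
    have tb: "\<tau> \<subseteq> \<beta>" using Cons.prems(2) False \<beta>_def by auto
    define fb where "fb = g' (FP q) (phi ` \<beta>)"
    have fbm: "fb \<in> mcells Y m'" using st(2) fb_def unfolding dcells_def by blast
    have sub: "phi ` \<tau> \<subseteq> fst fb" using st(3) tb fb_def by auto
    define c where "c = faceY fb (phi ` \<tau>)"
    have c: "(c, fb) \<in> contained Y m' g'" "fst c = phi ` \<tau>" using faceY[OF fbm sub] c_def by auto
    have c1: "(fb, FP (x # q)) \<in> contained Y m' g'" "FP (x # q) \<in> mcells Y m'"
      using st(6) fb_def unfolding coface_def dcells_def by auto
    have c2: "(fb, FP q) \<in> contained Y m' g'" "FP q \<in> mcells Y m'"
      using st(5) fb_def unfolding coface_def dcells_def by auto
    have "faceY (FP (x # q)) (phi ` \<tau>) = c" using faceY_eq[OF c1(2) mc_trans[OF mcY c(1) c1(1)] c(2)] .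
    moreover have "faceY (FP q) (phi ` \<tau>) = c" using faceY_eq[OF c2(2) mc_trans[OF mcY c(1) c2(1)] c(2)] .
    moreover have "\<tau> \<subseteq> arb_simplex d q" using tb \<beta>_def by auto
    ultimately show ?thesis using Cons.IH[OF q] by simp
  qed
qed

definition F :: "(nat \<times> nat) list mcell \<Rightarrow> 'w mcell" where
  "F a = faceY (FP (base (fst a))) (phi ` fst a)"

lemma F_eq: "arb_path d k p \<Longrightarrow> \<tau> \<subseteq> arb_simplex d p \<Longrightarrow> F (\<tau>, n) = faceY (FP p) (phi ` \<tau>)"
  unfolding F_def using key by simp

lemma F_props:
  assumes "arb_path d k p" "\<tau> \<subseteq> arb_simplex d p"
  shows "F (\<tau>, n) \<in> mcells Y m' \<and> fst (F (\<tau>, n)) = phi ` \<tau> \<and> (F (\<tau>, n), FP p) \<in> contained Y m' g'"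
proof -
  have pp: "phiprop p" using inv[OF assms(1)] .
  have "phi ` \<tau> \<subseteq> fst (FP p)" using phi_img[OF assms(1) pp] assms(2) by blast
  then show ?thesis using faceY[OF FP_mcell[OF pp]] F_eq[OF assms] by simp
qed

lemma F_top: "arb_path d k p \<Longrightarrow> F (arb_simplex d p, n) = FP p"
proof -
  assume p: "arb_path d k p"
  have pp: "phiprop p" using inv[OF p] .
  have "faceY (FP p) (phi ` arb_simplex d p) = FP p"
    using faceY_eq[OF FP_mcell[OF pp], of "FP p"] phi_img[OF p pp] unfolding contained_def by simp
  then show ?thesis using F_eq[OF p] by simp
qed


lemma Y_sub: assumes "\<sigma> \<in> Y" "\<tau> \<subseteq> \<sigma>" shows "\<tau> \<in> Y"
proof -
  have sc: "simplicial_complex d Y" using mcY unfolding multicomplex_def by (rule conjunct1)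
  have "\<forall>\<sigma>\<in>Y. \<forall>\<tau>. \<tau> \<subseteq> \<sigma> \<longrightarrow> \<tau> \<in> Y"
    using sc unfolding simplicial_complex_def by (rule conjunct1[OF conjunct2[OF conjunct2]])
  then show ?thesis using assms by blast
qed

lemma F_inj_card: assumes "arb_path d k p" "\<tau> \<subseteq> arb_simplex d p" shows "card (phi ` \<tau>) = card \<tau>"
  using card_image[OF inj_on_subset[OF phi_inj[OF assms(1) inv[OF assms(1)]] assms(2)]] .

lemma Tcell: "a \<in> mcells (arboreal d k) arb_m \<Longrightarrow> \<exists>p. arb_path d k p \<and> fst a \<subseteq> arb_simplex d p \<and> a = (fst a, 1)"
  unfolding mcells_arb arb_mem by (auto simp: prod_eq_iff)

lemma F_compat:
  assumes b: "b \<in> dcells (d - 1) (arboreal d k) arb_m" and a: "a \<in> coface d (arboreal d k) arb_m arb_g b" and l: "l < k"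
  shows "F (\<Omega> b l a) = \<omega>' (F b) l (F a)"
proof -
  obtain q i where q: "arb_path d k q" "i \<le> d" "q \<noteq> [] \<longrightarrow> fst (hd q) \<noteq> i"
    and bq: "b = ({v \<in> arb_simplex d q. fst (hd v) \<noteq> i}, 1)" using face_T[OF d1 b] by blast
  define \<beta> where "\<beta> = {v \<in> arb_simplex d q. fst (hd v) \<noteq> i}"
  have bb: "b = (\<beta>, 1)" using bq \<beta>_def by simp
  note cT = coface_T[OF d1 k1 ordT q, folded \<beta>_def]
  have pq: "phiprop q" using inv[OF q(1)] .
  have bsub: "\<beta> \<subseteq> arb_simplex d q" using \<beta>_def by blast
  define fb where "fb = F b"
  have fbp: "fb \<in> mcells Y m'" "fst fb = phi ` \<beta>" "(fb, FP q) \<in> contained Y m' g'"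
    using F_props[OF q(1) bsub] fb_def bb by auto
  have cb: "card \<beta> = d" using beta_card[OF q(1,2)] \<beta>_def by simp
  have fbd: "fb \<in> dcells (d - 1) Y m'" unfolding dcells_def using fbp F_inj_card[OF q(1) bsub] cb d1 by simp
  have Fq: "FP q \<in> coface d Y m' g' fb" unfolding coface_def using fbp pq phiprop_def by blast
  have Sq: "(arb_simplex d q, 1) \<in> coface d (arboreal d k) arb_m arb_g b" using cT(1) bb by simp
  have injT: "inj_on (\<lambda>l. \<Omega> b l (arb_simplex d q, 1)) {..<k}"
    using ord_inj[OF ordT k1 b Sq] cT(2) bb by simp
  have K: "F (\<Omega> b l (arb_simplex d q, 1)) = \<omega>' fb l (FP q)" if l: "l < k" for l
  proof -
    have "\<Omega> b l (arb_simplex d q, 1) \<in> coface d (arboreal d k) arb_m arb_g b" using ord_in[OF ordT k1 b Sq l] .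
    then have "\<Omega> b l (arb_simplex d q, 1) \<in> insert (arb_simplex d q, 1) ((\<lambda>j. (arb_simplex d ((i, j) # q), 1)) ` {1..k-1})"
      using cT(1) bb by simp
    then show ?thesis
    proof
      assume e: "\<Omega> b l (arb_simplex d q, 1) = (arb_simplex d q, 1)"
      have "\<Omega> b 0 (arb_simplex d q, 1) = (arb_simplex d q, 1)" using ord_zero[OF ordT k1 b Sq] .
      then have "l = 0" using inj_onD[OF injT, of l 0] e l k1 by simp
      then show ?thesis using e F_top[OF q(1)] ord_zero[OF ordY k1 fbd Fq] by simp
    next
      assume "\<Omega> b l (arb_simplex d q, 1) \<in> (\<lambda>j. (arb_simplex d ((i, j) # q), 1)) ` {1..k-1}"
      then obtain j where j: "j \<in> {1..k-1}" and e: "\<Omega> b l (arb_simplex d q, 1) = (arb_simplex d ((i, j) # q), 1)" by blast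
      have pj: "arb_path d k ((i, j) # q)" using j q unfolding path_Cons by auto
      note st = step[OF pj pq]
      have bet: "{v \<in> arb_simplex d q. fst (hd v) \<noteq> fst (i, j)} = \<beta>" using \<beta>_def by simp
      have L: "Lq q (i, j) < k" "\<Omega> b (Lq q (i, j)) (arb_simplex d q, 1) = (arb_simplex d ((i, j) # q), 1)"
        using st(1) bet bb by auto
      have "Lq q (i, j) = l" using inj_onD[OF injT, of "Lq q (i, j)" l] L e l by simp
      moreover have "g' (FP q) (phi ` \<beta>) = fb"
      proof -
        have "(g' (FP q) (phi ` \<beta>), FP q) \<in> contained Y m' g'" using st(5) bet unfolding coface_def by simp
        then have "faceY (FP q) (phi ` \<beta>) = g' (FP q) (phi ` \<beta>)"
          using faceY_eq[OF FP_mcell[OF pq]] st(3) bet by simp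
        moreover have "fb = faceY (FP q) (phi ` \<beta>)" using F_eq[OF q(1) bsub] fb_def bb by simp
        ultimately show ?thesis by simp
      qed
      ultimately have "FP ((i, j) # q) = \<omega>' fb l (FP q)" using st(4) bet by simp
      then show ?thesis using e F_top[OF pj] by simp
    qed
  qed
  obtain l' where l': "l' < k" "\<Omega> b l' (arb_simplex d q, 1) = a" using ord_trans[OF ordT k1 b Sq a] by blast
  have "F (\<Omega> b l a) = F (\<Omega> b ((l + l') mod k) (arb_simplex d q, 1))"
    using ord_hom[OF ordT k1 b Sq l l'(1)] l'(2) by simp
  also have "\<dots> = \<omega>' fb ((l + l') mod k) (FP q)" using K k1 by simp
  also have "\<dots> = \<omega>' fb l (\<omega>' fb l' (FP q))" using ord_hom[OF ordY k1 fbd Fq l l'(1)] .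
  also have "\<dots> = \<omega>' fb l (F a)" using K[OF l'(1)] l'(2) by simp
  finally show ?thesis using fb_def by simp
qed

lemma F_morph: "is_morphism d k (arboreal d k) arb_m arb_g \<Gamma> \<Omega> (arb_root d) Y m' g' \<gamma>' \<omega>' b0 F"
  unfolding is_morphism_def
proof (intro conjI)
  show "\<exists>\<phi>. (\<forall>\<sigma>\<in>arboreal d k. \<phi> ` \<sigma> \<in> Y) \<and>
        (\<forall>a\<in>mcells (arboreal d k) arb_m. F a \<in> mcells Y m' \<and> fst (F a) = \<phi> ` fst a \<and> card (fst (F a)) = card (fst a)) \<and>
        (\<forall>a\<in>mcells (arboreal d k) arb_m. \<forall>\<sigma>. codim1 \<sigma> (fst a) \<longrightarrow> F (arb_g a \<sigma>) = g' (F a) (\<phi> ` \<sigma>))"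
  proof (intro exI[of _ phi] conjI)
    show "\<forall>\<sigma>\<in>arboreal d k. phi ` \<sigma> \<in> Y"
    proof
      fix \<sigma> assume "\<sigma> \<in> arboreal d k"
      then obtain p where p: "arb_path d k p" "\<sigma> \<subseteq> arb_simplex d p" unfolding arb_mem by blast
      have pp: "phiprop p" using inv[OF p(1)] .
      have "fst (FP p) \<in> Y" using FP_mcell[OF pp] unfolding mcells_def by auto
      moreover have "phi ` \<sigma> \<subseteq> fst (FP p)" using phi_img[OF p(1) pp] p(2) by blast
      ultimately show "phi ` \<sigma> \<in> Y" using Y_sub by blast
    qed
    show "\<forall>a\<in>mcells (arboreal d k) arb_m. F a \<in> mcells Y m' \<and> fst (F a) = phi ` fst a \<and> card (fst (F a)) = card (fst a)"
    proof
      fix a assume "a \<in> mcells (arboreal d k) arb_m"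
      then obtain p where p: "arb_path d k p" "fst a \<subseteq> arb_simplex d p" "a = (fst a, 1)" using Tcell by blast
      show "F a \<in> mcells Y m' \<and> fst (F a) = phi ` fst a \<and> card (fst (F a)) = card (fst a)"
        using F_props[OF p(1,2), of 1] F_inj_card[OF p(1,2)] p(3) by simp
    qed
    show "\<forall>a\<in>mcells (arboreal d k) arb_m. \<forall>\<sigma>. codim1 \<sigma> (fst a) \<longrightarrow> F (arb_g a \<sigma>) = g' (F a) (phi ` \<sigma>)"
    proof (intro ballI allI impI)
      fix a \<sigma> assume a: "a \<in> mcells (arboreal d k) arb_m" and c: "codim1 \<sigma> (fst a)"
      then obtain p where p: "arb_path d k p" "fst a \<subseteq> arb_simplex d p" "a = (fst a, 1)" using Tcell by blast
      have ss: "\<sigma> \<subseteq> arb_simplex d p" using c p unfolding codim1_def by blast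
      have Fa: "F a \<in> mcells Y m'" "fst (F a) = phi ` fst a" "(F a, FP p) \<in> contained Y m' g'"
        using F_props[OF p(1,2), of 1] p(3) by auto
      have cd: "codim1 (phi ` \<sigma>) (fst (F a))"
        using c F_inj_card[OF p(1) ss] F_inj_card[OF p(1,2)] Fa(2) unfolding codim1_def by auto
      have gs: "(g' (F a) (phi ` \<sigma>), FP p) \<in> contained Y m' g'"
        using mc_trans[OF mcY mc_step[OF mcY Fa(1) cd] Fa(3)] .
      have "fst (g' (F a) (phi ` \<sigma>)) = phi ` \<sigma>" using mc_g[OF mcY Fa(1) cd] by blast
      then have "faceY (FP p) (phi ` \<sigma>) = g' (F a) (phi ` \<sigma>)"
        using faceY_eq[OF FP_mcell[OF inv[OF p(1)]] gs] by simp
      then show "F (arb_g a \<sigma>) = g' (F a) (phi ` \<sigma>)" using F_eq[OF p(1) ss] unfolding arb_g_def by simp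
    qed
  qed
  show "F (arb_root d) = b0" unfolding arb_root_def using F_top[of "[]"] by simp
  show "\<forall>a\<in>mcells (arboreal d k) arb_m. \<gamma>' ` fst (F a) = \<Gamma> ` fst a"
  proof
    fix a assume "a \<in> mcells (arboreal d k) arb_m"
    then obtain p where p: "arb_path d k p" "fst a \<subseteq> arb_simplex d p" "a = (fst a, 1)" using Tcell by blast
    have "fst (F a) = phi ` fst a" using F_props[OF p(1,2), of 1] p(3) by simp
    moreover have "\<gamma>' (phi v) = \<Gamma> v" if "v \<in> fst a" for v using inv[OF p(1)] p(2) that unfolding phiprop_def by blast
    ultimately show "\<gamma>' ` fst (F a) = \<Gamma> ` fst a" by (simp add: image_image)
  qed
  show "\<forall>b\<in>dcells (d - 1) (arboreal d k) arb_m. \<forall>a\<in>coface d (arboreal d k) arb_m arb_g b. \<forall>l<k.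
      F (\<Omega> b l a) = \<omega>' (F b) l (F a)"
    using F_compat by blast
qed


lemma T_contained:
  assumes p: "arb_path d k p" and sub: "\<tau> \<subseteq> arb_simplex d p"
  shows "((\<tau>, 1), (arb_simplex d p, 1)) \<in> contained (arboreal d k) arb_m arb_g"
proof -
  have m: "(arb_simplex d p, 1) \<in> mcells (arboreal d k) arb_m" using S_dcell[OF p] unfolding dcells_def by blast
  have "\<tau> \<subseteq> fst (arb_simplex d p, 1::nat)" using sub by simp
  then obtain e where e: "(e, (arb_simplex d p, 1)) \<in> contained (arboreal d k) arb_m arb_g" "fst e = \<tau>"
    using mc_exist[OF T_mc m] by blast
  have "e \<in> mcells (arboreal d k) arb_m" using mc_down[OF T_mc e(1) m] by blast
  then have "e = (\<tau>, 1)" using e(2) unfolding mcells_arb by (simp add: prod_eq_iff)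
  then show ?thesis using e(1) by simp
qed

lemma uniq:
  assumes mor: "is_morphism d k (arboreal d k) arb_m arb_g \<Gamma> \<Omega> (arb_root d) Y m' g' \<gamma>' \<omega>' b0 F'"
    and a: "a \<in> mcells (arboreal d k) arb_m"
  shows "F' a = F a"
proof -
  note M = mor[unfolded is_morphism_def]
  obtain \<phi>' where PHI: "(\<forall>\<sigma>\<in>arboreal d k. \<phi>' ` \<sigma> \<in> Y) \<and>
        (\<forall>a\<in>mcells (arboreal d k) arb_m. F' a \<in> mcells Y m' \<and> fst (F' a) = \<phi>' ` fst a \<and> card (fst (F' a)) = card (fst a)) \<and>
        (\<forall>a\<in>mcells (arboreal d k) arb_m. \<forall>\<sigma>. codim1 \<sigma> (fst a) \<longrightarrow> F' (arb_g a \<sigma>) = g' (F' a) (\<phi>' ` \<sigma>))"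
    using conjunct1[OF M] by (rule exE)
  note P2 = conjunct1[OF conjunct2[OF PHI]]
  note P3 = conjunct2[OF conjunct2[OF PHI]]
  note root = conjunct1[OF conjunct2[OF M]]
  note colr = conjunct1[OF conjunct2[OF conjunct2[OF M]]]
  note comp = conjunct2[OF conjunct2[OF conjunct2[OF M]]]
  have U1: "(F' c, F' z) \<in> contained Y m' g'" if "(c, z) \<in> contained (arboreal d k) arb_m arb_g" for c z
    using that unfolding contained_def
  proof (induction rule: rtrancl_induct)
    case base then show ?case by simp
  next
    case (step y z)
    then obtain \<sigma> where z: "z \<in> mcells (arboreal d k) arb_m" "codim1 \<sigma> (fst z)" "y = arb_g z \<sigma>"
      unfolding contain_step_def by blast
    have sm: "(\<sigma>, 1) \<in> mcells (arboreal d k) arb_m"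
      using mc_g[OF T_mc z(1,2)] unfolding arb_g_def by simp
    have "fst (F' (\<sigma>, 1)) = \<phi>' ` fst (\<sigma>, 1::nat) \<and> card (fst (F' (\<sigma>, 1))) = card (fst (\<sigma>, 1::nat))"
      using bspec[OF P2 sm] by blast
    then have c1: "card (\<phi>' ` \<sigma>) = card \<sigma>" by (metis fst_conv)
    have c2: "fst (F' z) = \<phi>' ` fst z" "card (\<phi>' ` fst z) = card (fst z)" "F' z \<in> mcells Y m'" using P2 z(1) by auto
    have cd: "codim1 (\<phi>' ` \<sigma>) (fst (F' z))" using z(2) c1 c2 unfolding codim1_def by auto
    have "F' y = g' (F' z) (\<phi>' ` \<sigma>)" using P3 z by blast
    then have "(F' y, F' z) \<in> contained Y m' g'" using mc_step[OF mcY c2(3) cd] by simp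
    then show ?case using step.IH unfolding contained_def by simp
  qed
  have U3: "\<phi>' v = phi v" if p: "arb_path d k p" and e: "F' (arb_simplex d p, 1) = FP p" and v: "v \<in> arb_simplex d p" for p v
  proof -
    have pp: "phiprop p" using inv[OF p] .
    have vm: "({v}, 1) \<in> mcells (arboreal d k) arb_m" unfolding mcells_arb arb_mem using p v by auto
    have "(F' ({v}, 1), FP p) \<in> contained Y m' g'" using U1[OF T_contained[OF p]] v e by simp
    then have "fst (F' ({v}, 1)) \<subseteq> fst (FP p)" using mc_down[OF mcY _ FP_mcell[OF pp]] by blast
    moreover have "fst (F' ({v}, 1)) = {\<phi>' v}" using bspec[OF P2 vm] by simp
    ultimately have in1: "\<phi>' v \<in> fst (FP p)" by simp
    have "\<gamma>' ` {\<phi>' v} = \<Gamma> ` {v}" using bspec[OF colr vm] \<open>fst (F' ({v}, 1)) = {\<phi>' v}\<close> by simp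
    then have "\<gamma>' (\<phi>' v) = \<Gamma> v" by simp
    moreover have "phi v \<in> fst (FP p)" "\<gamma>' (phi v) = \<Gamma> v" using pp v unfolding phiprop_def by auto
    moreover have "inj_on \<gamma>' (fst (FP p))" using colY_top pp unfolding phiprop_def by blast
    ultimately show ?thesis using in1 inj_onD[of \<gamma>' "fst (FP p)" "\<phi>' v" "phi v"] by simp
  qed
  have U2: "F' (arb_simplex d p, 1) = FP p" if "arb_path d k p" for p
    using that
  proof (induction p)
    case Nil
    then show ?case using root unfolding arb_root_def by simp
  next
    case (Cons x q)
    have q: "arb_path d k q" using Cons.prems path_Cons by auto
    have IH: "F' (arb_simplex d q, 1) = FP q" using Cons.IH[OF q] .
    have pq: "phiprop q" using inv[OF q] .
    define \<beta> where "\<beta> = {v \<in> arb_simplex d q. fst (hd v) \<noteq> fst x}"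
    note st = step[OF Cons.prems pq, folded \<beta>_def]
    have L: "Lq q x < k" "\<Omega> (\<beta>, 1) (Lq q x) (arb_simplex d q, 1) = (arb_simplex d (x # q), 1)" using st(1) by auto
    have "F' (\<Omega> (\<beta>, 1) (Lq q x) (arb_simplex d q, 1)) = \<omega>' (F' (\<beta>, 1)) (Lq q x) (F' (arb_simplex d q, 1))"
      using comp st(7) st(8) L(1) by blast
    moreover have "F' (\<beta>, 1) = g' (FP q) (phi ` \<beta>)"
    proof -
      have sm: "(arb_simplex d q, 1) \<in> mcells (arboreal d k) arb_m" using S_dcell[OF q] unfolding dcells_def by blast
      have cb: "card \<beta> = d" using beta_card[OF q] Cons.prems path_Cons \<beta>_def by auto
      have cd: "codim1 \<beta> (fst (arb_simplex d q, 1::nat))" unfolding codim1_def using cb S_card[OF q] \<beta>_def by auto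
      have "F' (arb_g (arb_simplex d q, 1) \<beta>) = g' (F' (arb_simplex d q, 1)) (\<phi>' ` \<beta>)"
        using bspec[OF P3 sm] cd by blast
      then have "F' (\<beta>, 1) = g' (F' (arb_simplex d q, 1)) (\<phi>' ` \<beta>)" unfolding arb_g_def by simp
      moreover have "\<phi>' ` \<beta> = phi ` \<beta>" using U3[OF q IH] \<beta>_def by auto
      ultimately show ?thesis using IH by simp
    qed
    ultimately show ?case using L(2) st(4) IH by simp
  qed
  obtain p where p: "arb_path d k p" "fst a \<subseteq> arb_simplex d p" "a = (fst a, 1)" using Tcell[OF a] by blast
  have "(F' a, FP p) \<in> contained Y m' g'" using U1[OF T_contained[OF p(1,2)]] U2[OF p(1)] p(3) by simp
  moreover have "fst (F' a) = phi ` fst a"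
  proof -
    have "fst (F' a) = \<phi>' ` fst a" using bspec[OF P2 a] by blast
    moreover have "\<phi>' ` fst a = phi ` fst a" using U3[OF p(1) U2[OF p(1)]] p(2) by (intro image_cong) auto
    ultimately show ?thesis by simp
  qed
  ultimately have "faceY (FP p) (phi ` fst a) = F' a" using faceY_eq[OF FP_mcell[OF inv[OF p(1)]]] by simp
  moreover have "F a = F (fst a, 1)" using p(3) by (rule arg_cong)
  ultimately show ?thesis using F_eq[OF p(1,2), of 1] by simp
qed

end

theorem proposition5:
  fixes d k :: nat
    and \<Gamma> :: "(nat \<times> nat) list \<Rightarrow> nat"
    and \<Omega> :: "(nat \<times> nat) list mcell \<Rightarrow> nat \<Rightarrow> (nat \<times> nat) list mcell \<Rightarrow> (nat \<times> nat) list mcell"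
  assumes "1 \<le> d" and "1 \<le> k"
    and "coloring d (arboreal d k) \<Gamma>"
    and "k_ordering d k (arboreal d k) arb_m arb_g \<Omega>"
  shows "is_object d k (arboreal d k) arb_m arb_g \<Gamma> \<Omega> (arb_root d) \<and>
    (\<forall>(Y :: 'w set set) m' g' \<gamma>' \<omega>' b0.
       is_object d k Y m' g' \<gamma>' \<omega>' b0 \<longrightarrow>
       (\<exists>F. is_morphism d k (arboreal d k) arb_m arb_g \<Gamma> \<Omega> (arb_root d) Y m' g' \<gamma>' \<omega>' b0 F \<and>
            (\<forall>F'. is_morphism d k (arboreal d k) arb_m arb_g \<Gamma> \<Omega> (arb_root d) Y m' g' \<gamma>' \<omega>' b0 F'
                  \<longrightarrow> (\<forall>a\<in>mcells (arboreal d k) arb_m. F' a = F a))))"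
proof (rule conjI)
  show "is_object d k (arboreal d k) arb_m arb_g \<Gamma> \<Omega> (arb_root d)" using T_obj[OF assms] .
  show "\<forall>(Y :: 'w set set) m' g' \<gamma>' \<omega>' b0.
       is_object d k Y m' g' \<gamma>' \<omega>' b0 \<longrightarrow>
       (\<exists>F. is_morphism d k (arboreal d k) arb_m arb_g \<Gamma> \<Omega> (arb_root d) Y m' g' \<gamma>' \<omega>' b0 F \<and>
            (\<forall>F'. is_morphism d k (arboreal d k) arb_m arb_g \<Gamma> \<Omega> (arb_root d) Y m' g' \<gamma>' \<omega>' b0 F'
                  \<longrightarrow> (\<forall>a\<in>mcells (arboreal d k) arb_m. F' a = F a)))"
  proof (intro allI impI)
    fix Y :: "'w set set" and m' g' \<gamma>' \<omega>' b0
    assume o: "is_object d k Y m' g' \<gamma>' \<omega>' b0"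
    interpret U: univ d k \<Gamma> \<Omega> Y m' g' \<gamma>' \<omega>' b0 using assms o by unfold_locales
    show "\<exists>F. is_morphism d k (arboreal d k) arb_m arb_g \<Gamma> \<Omega> (arb_root d) Y m' g' \<gamma>' \<omega>' b0 F \<and>
            (\<forall>F'. is_morphism d k (arboreal d k) arb_m arb_g \<Gamma> \<Omega> (arb_root d) Y m' g' \<gamma>' \<omega>' b0 F'
                  \<longrightarrow> (\<forall>a\<in>mcells (arboreal d k) arb_m. F' a = F a))"
    proof (intro exI[of _ U.F] conjI allI impI ballI)
      show "is_morphism d k (arboreal d k) arb_m arb_g \<Gamma> \<Omega> (arb_root d) Y m' g' \<gamma>' \<omega>' b0 U.F"
        by (rule U.F_morph)
    next
      fix F' a
      assume "is_morphism d k (arboreal d k) arb_m arb_g \<Gamma> \<Omega> (arb_root d) Y m' g' \<gamma>' \<omega>' b0 F'"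
        and "a \<in> mcells (arboreal d k) arb_m"
      then show "F' a = U.F a" by (rule U.uniq)
    qed
  qed
qed

end
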